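(* Let $k\ge3$ and $p=p(n)=O(1/n)$. Let $\theta$ be a finite rooted tree with vertex set contained in $\mathbb R$, let $\tau_1,\tau_2\in\mathcal S_k(\theta)$ and let $\omega\geq0$ be an integer. With $(\tilde G,\hat\sigma_1,\hat\sigma_2)$ drawn from $\tilde\pi_{n,p}$, $$\tilde\pi_{n,p}\left[\left|Q_{\theta,\tau_1,\tau_2,\omega}(\tilde G,\hat\sigma_1,\hat\sigma_2)-\mathbb E[Q_{\theta,\tau_1,\tau_2,\omega}(\tilde G,\hat\sigma_1,\hat\sigma_2)]\right|>n^{-1/3}\right]\leq\exp(-\Omega(\ln^2n)).$$
   Context: $\mathcal S_k(G)$ is the set of proper $k$-colorings of a graph $G$. The binomial planted replica model $\tilde\pi_{n,p}$ is the distribution of $(\tilde G,\hat\sigma_1,\hat\sigma_2)$ obtained by choosing $\hat\sigma_1,\hat\sigma_2:[n]\to[k]$ independently and uniformly, and then including each pair $\{u,v\}\subset[n]$ with $\hat\sigma_1(u)\ne\hat\sigma_1(v)$ and $\hat\sigma_2(u)\ne\hat\sigma_2(v)$ as an edge independently with probability $p$. For a graph $G$, $v\in V(G)$, a map $\sigma$ on $V(G)$, $\partial^\omega(G,v,\sigma)$ is the subgraph induced on vertices at distance at most $\omega$ from $v$, rooted at $v$, with the restriction of $\sigma$. Two rooted colored graphs $(G,v,\sigma),(G',v',\sigma')$ with vertex sets in $\mathbb R$ are isomorphic ($\cong$) if there is a graph isomorphism $\varphi$ with $\varphi(v)=v'$, $\sigma=\sigma'\circ\varphi$ and $u<w\Rightarrow\varphi(u)<\varphi(w)$.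 $Q_{\theta,\tau_1,\tau_2,\omega}(G,\sigma_1,\sigma_2)=\frac1n\sum_{v\in[n]}\mathbf 1\{\partial^\omega(G,v,\sigma_1)\cong(\theta,\tau_1)\}\mathbf 1\{\partial^\omega(G,v,\sigma_2)\cong(\theta,\tau_2)\}$. *)

theory Defs
  imports "HOL-Probability.Probability" "HOL-Library.Landau_Symbols"
begin

type_synonym rgraph = "real set \<times> real set set"

definition wf_graph :: "rgraph \<Rightarrow> bool" where
  "wf_graph G \<longleftrightarrow> finite (fst G) \<and>
     (\<forall>e\<in>snd G. \<exists>u w. u \<noteq> w \<and> u \<in> fst G \<and> w \<in> fst G \<and> e = {u, w})"

definition adj :: "rgraph \<Rightarrow> real \<Rightarrow> real \<Rightarrow> bool" where
  "adj G u w \<longleftrightarrow> {u, w} \<in> snd G"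

fun dist_ball :: "rgraph \<Rightarrow> real \<Rightarrow> nat \<Rightarrow> real set" where
  "dist_ball G v 0 = {v}"
| "dist_ball G v (Suc m) =
     dist_ball G v m \<union> {u \<in> fst G. \<exists>w\<in>dist_ball G v m. adj G w u}"

definition connected_graph :: "rgraph \<Rightarrow> bool" where
  "connected_graph G \<longleftrightarrow> (\<forall>u\<in>fst G. \<forall>w\<in>fst G. \<exists>m. w \<in> dist_ball G u m)"

definition is_cycle :: "rgraph \<Rightarrow> real list \<Rightarrow> bool" where
  "is_cycle G xs \<longleftrightarrow> length xs \<ge> 3 \<and> distinct xs \<and> set xs \<subseteq> fst G \<and>
     (\<forall>i. Suc i < length xs \<longrightarrow> adj G (xs ! i) (xs ! Suc i)) \<and>
     adj G (last xs) (hd xs)"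

definition is_tree :: "rgraph \<Rightarrow> bool" where
  "is_tree G \<longleftrightarrow> wf_graph G \<and> fst G \<noteq> {} \<and> connected_graph G \<and>
     \<not> (\<exists>xs. is_cycle G xs)"

definition proper_colorings :: "nat \<Rightarrow> rgraph \<Rightarrow> (real \<Rightarrow> nat) set" where
  "proper_colorings k G = {\<sigma>. (\<forall>v\<in>fst G. \<sigma> v \<in> {1..k}) \<and>
     (\<forall>u\<in>fst G. \<forall>w\<in>fst G. adj G u w \<longrightarrow> \<sigma> u \<noteq> \<sigma> w)}"

definition induced :: "rgraph \<Rightarrow> real set \<Rightarrow> rgraph" where
  "induced G B = (B \<inter> fst G, {e \<in> snd G. e \<subseteq> B})"

text \<open>The depth-\<omega> neighbourhood of v (rooted at v); the colouring is carried
separately and only compared on its vertex set, i.e. restricted.\<close>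
definition nbhd :: "rgraph \<Rightarrow> real \<Rightarrow> nat \<Rightarrow> rgraph" where
  "nbhd G v \<omega> = induced G (dist_ball G v \<omega>)"

definition rooted_iso ::
  "rgraph \<Rightarrow> real \<Rightarrow> (real \<Rightarrow> nat) \<Rightarrow> rgraph \<Rightarrow> real \<Rightarrow> (real \<Rightarrow> nat) \<Rightarrow> bool" where
  "rooted_iso G v \<sigma> G' v' \<sigma>' \<longleftrightarrow> (\<exists>\<phi>. bij_betw \<phi> (fst G) (fst G') \<and>
     (\<forall>u\<in>fst G. \<forall>w\<in>fst G. adj G u w \<longleftrightarrow> adj G' (\<phi> u) (\<phi> w)) \<and>
     \<phi> v = v' \<and>
     (\<forall>u\<in>fst G. \<sigma> u = \<sigma>' (\<phi> u)) \<and>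
     (\<forall>u\<in>fst G. \<forall>w\<in>fst G. u < w \<longrightarrow> \<phi> u < \<phi> w))"

definition vset :: "nat \<Rightarrow> real set" where
  "vset n = real ` {1..n}"

definition col_maps :: "nat \<Rightarrow> nat \<Rightarrow> (real \<Rightarrow> nat) set" where
  "col_maps n k = PiE (vset n) (\<lambda>_. {1..k})"

definition allowed_pairs :: "nat \<Rightarrow> (real \<Rightarrow> nat) \<Rightarrow> (real \<Rightarrow> nat) \<Rightarrow> real set set" where
  "allowed_pairs n \<sigma>1 \<sigma>2 = {{u, w} | u w. u \<in> vset n \<and> w \<in> vset n \<and> u \<noteq> w \<and>
      \<sigma>1 u \<noteq> \<sigma>1 w \<and> \<sigma>2 u \<noteq> \<sigma>2 w}"

definition random_edges :: "real \<Rightarrow> real set set \<Rightarrow> real set set pmf" where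
  "random_edges p A = map_pmf (\<lambda>f. {e \<in> A. f e}) (Pi_pmf A False (\<lambda>_. bernoulli_pmf p))"

definition planted_replica ::
  "nat \<Rightarrow> nat \<Rightarrow> real \<Rightarrow> (rgraph \<times> (real \<Rightarrow> nat) \<times> (real \<Rightarrow> nat)) pmf" where
  "planted_replica k n p =
     do { \<sigma>1 \<leftarrow> pmf_of_set (col_maps n k);
          \<sigma>2 \<leftarrow> pmf_of_set (col_maps n k);
          E \<leftarrow> random_edges p (allowed_pairs n \<sigma>1 \<sigma>2);
          return_pmf ((vset n, E), \<sigma>1, \<sigma>2) }"

definition Qstat ::
  "nat \<Rightarrow> rgraph \<Rightarrow> real \<Rightarrow> (real \<Rightarrow> nat) \<Rightarrow> (real \<Rightarrow> nat) \<Rightarrow> nat \<Rightarrow>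
   rgraph \<times> (real \<Rightarrow> nat) \<times> (real \<Rightarrow> nat) \<Rightarrow> real" where
  "Qstat n \<theta> r \<tau>1 \<tau>2 \<omega> X = (case X of (G, \<sigma>1, \<sigma>2) \<Rightarrow>
     (1 / real n) * (\<Sum>v\<in>vset n.
        of_bool (rooted_iso (nbhd G v \<omega>) v \<sigma>1 \<theta> r \<tau>1) *
        of_bool (rooted_iso (nbhd G v \<omega>) v \<sigma>2 \<theta> r \<tau>2)))"

end

theory Submission
  imports Defs
begin


lemma finite_set_Pi_pmf:
  assumes "finite A" "\<And>i. finite (set_pmf (D i))"
  shows "finite (set_pmf (Pi_pmf A d D))"
proof -
  have "set_pmf (Pi_pmf A d D) \<subseteq> PiE_dflt A d (set_pmf \<circ> D)"
    using set_Pi_pmf_subset'[OF assms(1), of d D] by simp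
  moreover have "finite (PiE_dflt A d (set_pmf \<circ> D))"
    using assms by (intro finite_PiE_dflt) auto
  ultimately show ?thesis by (rule finite_subset)
qed

lemma expectation_pair_fin:
  fixes h :: "'a \<times> 'b \<Rightarrow> real"
  assumes fa: "finite (set_pmf A)" and fb: "finite (set_pmf B)"
  shows "measure_pmf.expectation (pair_pmf A B) h =
         measure_pmf.expectation A (\<lambda>a. measure_pmf.expectation B (\<lambda>b. h (a,b)))"
proof -
  have "measure_pmf.expectation (pair_pmf A B) h =
        (\<Sum>x\<in>set_pmf A \<times> set_pmf B. h x * pmf (pair_pmf A B) x)"
    using fa fb by (intro integral_measure_pmf_real) auto
  also have "\<dots> = (\<Sum>a\<in>set_pmf A. \<Sum>b\<in>set_pmf B. h (a,b) * (pmf A a * pmf B b))"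
    by (subst sum.cartesian_product) (auto intro!: sum.cong simp: pmf_pair)
  also have "\<dots> = (\<Sum>a\<in>set_pmf A. (\<Sum>b\<in>set_pmf B. h (a,b) * pmf B b) * pmf A a)"
    by (simp add: sum_distrib_right sum_distrib_left mult_ac)
  also have "\<dots> = measure_pmf.expectation A (\<lambda>a. measure_pmf.expectation B (\<lambda>b. h (a,b)))"
    using fa fb by (subst integral_measure_pmf_real[where A="set_pmf A"])
      (auto intro!: sum.cong simp: integral_measure_pmf_real[where A="set_pmf B"])
  finally show ?thesis .
qed

lemma hoeffding_lemma_pmf:
  fixes h :: "'a \<Rightarrow> real"
  assumes fin: "finite (set_pmf M)" and l: "l > 0" and c: "\<And>x y. x \<in> set_pmf M \<Longrightarrow> y \<in> set_pmf M \<Longrightarrow> \<bar>h x - h y\<bar> \<le> c"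
  shows "measure_pmf.expectation M (\<lambda>x. exp (l * (h x - measure_pmf.expectation M h)))
          \<le> exp (l\<^sup>2 * c\<^sup>2 / 2)"
proof -
  obtain x0 where x0: "x0 \<in> set_pmf M" using set_pmf_not_empty[of M] by blast
  interpret ibr: interval_bounded_random_variable "measure_pmf M" h "h x0 - c" "h x0 + c"
  proof
    show "AE x in measure_pmf M. h x \<in> {h x0 - c..h x0 + c}"
    proof (intro AE_pmfI)
      fix y assume "y \<in> set_pmf M"
      then show "h y \<in> {h x0 - c..h x0 + c}" using c[of y x0] x0 by (auto simp: abs_le_iff)
    qed
  qed auto
  have "nn_integral M (\<lambda>x. exp (l * (h x - measure_pmf.expectation M h)))
        \<le> ennreal (exp (l\<^sup>2 * (h x0 + c - (h x0 - c))\<^sup>2 / 8))"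
    by (rule ibr.Hoeffdings_lemma_nn_integral[OF l])
  also have "l\<^sup>2 * (h x0 + c - (h x0 - c))\<^sup>2 / 8 = l\<^sup>2 * c\<^sup>2 / 2"
    by (simp add: power2_eq_square algebra_simps)
  also have "nn_integral M (\<lambda>x. exp (l * (h x - measure_pmf.expectation M h))) =
      ennreal (measure_pmf.expectation M (\<lambda>x. exp (l * (h x - measure_pmf.expectation M h))))"
    by (intro nn_integral_eq_integral integrable_measure_pmf_finite fin) auto
  finally show ?thesis
    by (subst (asm) ennreal_le_iff) auto
qed

lemma integral_abs_diff_le_pmf:
  fixes f g :: "'a \<Rightarrow> real"
  assumes fin: "finite (set_pmf M)" and c: "\<And>x. \<bar>f x - g x\<bar> \<le> c"
  shows "\<bar>measure_pmf.expectation M f - measure_pmf.expectation M g\<bar> \<le> c"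
proof -
  have "\<bar>measure_pmf.expectation M f - measure_pmf.expectation M g\<bar> =
        \<bar>measure_pmf.expectation M (\<lambda>x. f x - g x)\<bar>"
    using fin by (subst Bochner_Integration.integral_diff) (auto intro: integrable_measure_pmf_finite)
  also have "\<dots> \<le> measure_pmf.expectation M (\<lambda>x. \<bar>f x - g x\<bar>)"
    by (rule integral_abs_bound)
  also have "\<dots> \<le> measure_pmf.expectation M (\<lambda>x. c)"
    using fin c by (intro integral_mono) (auto intro: integrable_measure_pmf_finite)
  also have "\<dots> = c" by simp
  finally show ?thesis .
qed

lemma mcdiarmid_mgf:
  fixes D :: "'i \<Rightarrow> 'v pmf" and blk :: "'i \<Rightarrow> 'b" and c :: "'b \<Rightarrow> real"
  assumes J0: "finite J0" and K: "finite K" and l: "l > 0"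
    and fin: "\<And>i. finite (set_pmf (D i))"
  shows "(\<And>b x y. b \<in> K \<Longrightarrow> (\<And>i. blk i \<noteq> b \<Longrightarrow> x i = y i) \<Longrightarrow> \<bar>f x - f y\<bar> \<le> c b) \<Longrightarrow>
    measure_pmf.expectation (Pi_pmf {i\<in>J0. blk i \<in> K} d D)
      (\<lambda>x. exp (l * (f x - measure_pmf.expectation (Pi_pmf {i\<in>J0. blk i \<in> K} d D) f)))
    \<le> exp (l\<^sup>2 * (\<Sum>b\<in>K. (c b)\<^sup>2) / 2)"
  using K
proof (induction K arbitrary: f rule: finite_induct)
  case empty
  then show ?case by simp
next
  case (insert b K f)
  define A where "A = {i\<in>J0. blk i = b}"
  define B where "B = {i\<in>J0. blk i \<in> K}"
  have I: "{i\<in>J0. blk i \<in> insert b K} = B \<union> A" by (auto simp: A_def B_def)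
  have fA: "finite A" "finite B" using J0 by (auto simp: A_def B_def)
  have AB: "B \<inter> A = {}" using insert.hyps by (auto simp: A_def B_def)
  define m where "m = (\<lambda>(z::'i\<Rightarrow>'v,y::'i\<Rightarrow>'v) i. if i \<in> B then z i else y i)"
  define PA where "PA = Pi_pmf A d D"
  define PB where "PB = Pi_pmf B d D"
  have P: "Pi_pmf {i\<in>J0. blk i \<in> insert b K} d D = map_pmf m (pair_pmf PB PA)"
    unfolding I PA_def PB_def m_def by (rule Pi_pmf_union[OF fA(2) fA(1) AB])
  have finA: "finite (set_pmf PA)" and finB: "finite (set_pmf PB)"
    unfolding PA_def PB_def using fA fin by (auto intro: finite_set_Pi_pmf)
  define g where "g = (\<lambda>z. measure_pmf.expectation PA (\<lambda>y. f (m (z,y))))"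
  have Ef: "measure_pmf.expectation (map_pmf m (pair_pmf PB PA)) f = measure_pmf.expectation PB g"
    unfolding g_def by (simp add: expectation_pair_fin[OF finB finA])
  have glip: "\<bar>g x - g y\<bar> \<le> c b'" if "b' \<in> K" "\<And>i. blk i \<noteq> b' \<Longrightarrow> x i = y i" for b' x y
    unfolding g_def
  proof (rule integral_abs_diff_le_pmf[OF finA])
    fix z
    show "\<bar>f (m (x, z)) - f (m (y, z))\<bar> \<le> c b'"
      using that by (intro insert.prems) (auto simp: m_def)
  qed
  have IH: "measure_pmf.expectation PB (\<lambda>x. exp (l * (g x - measure_pmf.expectation PB g)))
      \<le> exp (l\<^sup>2 * (\<Sum>b\<in>K. (c b)\<^sup>2) / 2)"
    unfolding PB_def B_def using glip by (intro insert.IH) (auto simp: B_def PB_def)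
  have hlip: "\<bar>f (m (z, y)) - f (m (z, y'))\<bar> \<le> c b" if "y \<in> set_pmf PA" "y' \<in> set_pmf PA" for z y y'
  proof (intro insert.prems)
    fix i assume "blk i \<noteq> b"
    then have "i \<notin> A" by (auto simp: A_def)
    then have "y i = d" "y' i = d" using that set_Pi_pmf_subset[OF fA(1), of d D] by (auto simp: PA_def)
    then show "m (z, y) i = m (z, y') i" by (simp add: m_def)
  qed simp
  have hoef: "measure_pmf.expectation PA (\<lambda>y. exp (l * (f (m (z,y)) - g z))) \<le> exp (l\<^sup>2 * (c b)\<^sup>2 / 2)" for z
    unfolding g_def using hlip by (intro hoeffding_lemma_pmf[OF finA l]) auto
  let ?E = "measure_pmf.expectation PB g"
  have "measure_pmf.expectation (map_pmf m (pair_pmf PB PA)) (\<lambda>x. exp (l * (f x - ?E)))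
     = measure_pmf.expectation PB (\<lambda>z. measure_pmf.expectation PA (\<lambda>y. exp (l * (g z - ?E)) * exp (l * (f (m (z,y)) - g z))))"
    by (simp add: expectation_pair_fin[OF finB finA] mult_exp_exp algebra_simps)
  also have "\<dots> = measure_pmf.expectation PB (\<lambda>z. exp (l * (g z - ?E)) * measure_pmf.expectation PA (\<lambda>y. exp (l * (f (m (z,y)) - g z))))"
    by simp
  also have "\<dots> \<le> measure_pmf.expectation PB (\<lambda>z. exp (l * (g z - ?E)) * exp (l\<^sup>2 * (c b)\<^sup>2 / 2))"
    using finB hoef by (intro integral_mono integrable_measure_pmf_finite mult_left_mono) auto
  also have "\<dots> = exp (l\<^sup>2 * (c b)\<^sup>2 / 2) * measure_pmf.expectation PB (\<lambda>z. exp (l * (g z - ?E)))"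
    by (simp add: mult.commute)
  also have "\<dots> \<le> exp (l\<^sup>2 * (c b)\<^sup>2 / 2) * exp (l\<^sup>2 * (\<Sum>b\<in>K. (c b)\<^sup>2) / 2)"
    using IH by (intro mult_left_mono) auto
  also have "\<dots> = exp (l\<^sup>2 * (\<Sum>b\<in>insert b K. (c b)\<^sup>2) / 2)"
    using insert.hyps by (simp add: mult_exp_exp algebra_simps add_divide_distrib)
  finally show ?case unfolding P Ef .
qed

lemma chernoff_pmf:
  fixes f :: "'a \<Rightarrow> real"
  assumes fin: "finite (set_pmf P)" and l: "l > 0"
    and mgf: "measure_pmf.expectation P (\<lambda>x. exp (l * (f x - E))) \<le> B"
  shows "measure_pmf.prob P {x. f x - E \<ge> s} \<le> exp (- l * s) * B"
proof -
  have "measure_pmf.prob P {x. f x - E \<ge> s} = measure_pmf.expectation P (indicator {x. f x - E \<ge> s})"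
    by simp
  also have "\<dots> \<le> measure_pmf.expectation P (\<lambda>x. exp (- l * s) * exp (l * (f x - E)))"
  proof (intro integral_mono integrable_measure_pmf_finite fin)
    fix x
    show "indicator {x. f x - E \<ge> s} x \<le> exp (- l * s) * exp (l * (f x - E))"
    proof (cases "f x - E \<ge> s")
      case True
      then have "l * s \<le> l * (f x - E)" using l by (intro mult_left_mono) auto
      then have "1 \<le> exp (- l * s + l * (f x - E))" by simp
      also have "exp (- l * s + l * (f x - E)) = exp (- l * s) * exp (l * (f x - E))"
        by (rule exp_add)
      finally show ?thesis using True by simp
    qed simp
  qed
  also have "\<dots> = exp (- l * s) * measure_pmf.expectation P (\<lambda>x. exp (l * (f x - E)))"
    by simp
  also have "\<dots> \<le> exp (- l * s) * B"
    using mgf by (intro mult_left_mono) auto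
  finally show ?thesis .
qed

lemma mcdiarmid_pi:
  fixes D :: "'i \<Rightarrow> 'v pmf" and blk :: "'i \<Rightarrow> 'b" and c :: "'b \<Rightarrow> real"
  assumes J0: "finite J0" and K: "finite K" and J0K: "\<And>i. i \<in> J0 \<Longrightarrow> blk i \<in> K"
    and fin: "\<And>i. finite (set_pmf (D i))"
    and lip: "\<And>b x y. b \<in> K \<Longrightarrow> (\<And>i. blk i \<noteq> b \<Longrightarrow> x i = y i) \<Longrightarrow> \<bar>f x - f y\<bar> \<le> c b"
    and V: "(\<Sum>b\<in>K. (c b)\<^sup>2) \<le> V" "V > 0" and s: "s > 0"
  shows "measure_pmf.prob (Pi_pmf J0 d D)
           {x. \<bar>f x - measure_pmf.expectation (Pi_pmf J0 d D) f\<bar> \<ge> s} \<le> 2 * exp (- s\<^sup>2 / (2 * V))"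
proof -
  have J: "{i\<in>J0. blk i \<in> K} = J0" using J0K by auto
  define P where "P = Pi_pmf J0 d D"
  have finP: "finite (set_pmf P)" unfolding P_def using J0 fin by (rule finite_set_Pi_pmf)
  define l where "l = s / V"
  have l: "l > 0" using V s by (simp add: l_def)
  have key: "l\<^sup>2 * V / 2 - l * s = - s\<^sup>2 / (2 * V)"
    using V by (simp add: l_def power2_eq_square field_simps)
  have one: "measure_pmf.prob P {x. h x - measure_pmf.expectation P h \<ge> s} \<le> exp (- s\<^sup>2 / (2 * V))"
    if hlip: "\<And>b x y. b \<in> K \<Longrightarrow> (\<And>i. blk i \<noteq> b \<Longrightarrow> x i = y i) \<Longrightarrow> \<bar>h x - h y\<bar> \<le> c b" for h
  proof -
    have "measure_pmf.expectation P (\<lambda>x. exp (l * (h x - measure_pmf.expectation P h)))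
        \<le> exp (l\<^sup>2 * (\<Sum>b\<in>K. (c b)\<^sup>2) / 2)"
      using mcdiarmid_mgf[where D=D and blk=blk and f=h and c=c and d=d, OF J0 K l fin] hlip unfolding J P_def by blast
    also have "\<dots> \<le> exp (l\<^sup>2 * V / 2)"
      using V by (auto intro!: mult_left_mono divide_right_mono)
    finally have "measure_pmf.prob P {x. h x - measure_pmf.expectation P h \<ge> s} \<le> exp (- l * s) * exp (l\<^sup>2 * V / 2)"
      by (rule chernoff_pmf[OF finP l])
    also have "\<dots> = exp (- s\<^sup>2 / (2 * V))"
      by (subst exp_add[symmetric], subst key[symmetric]) (simp add: algebra_simps)
    finally show ?thesis .
  qed
  have a: "measure_pmf.prob P {x. f x - measure_pmf.expectation P f \<ge> s} \<le> exp (- s\<^sup>2 / (2 * V))"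
    using lip by (intro one) auto
  have b: "measure_pmf.prob P {x. (- f x) - measure_pmf.expectation P (\<lambda>x. - f x) \<ge> s} \<le> exp (- s\<^sup>2 / (2 * V))"
  proof (rule one)
    fix b and x y :: "'i \<Rightarrow> 'v" assume "b \<in> K" "\<And>i. blk i \<noteq> b \<Longrightarrow> x i = y i"
    then show "\<bar>- f x - - f y\<bar> \<le> c b" using lip[of b x y] by simp
  qed
  have "{x. \<bar>f x - measure_pmf.expectation P f\<bar> \<ge> s} \<subseteq>
        {x. f x - measure_pmf.expectation P f \<ge> s} \<union> {x. (- f x) - measure_pmf.expectation P (\<lambda>x. - f x) \<ge> s}"
    by auto
  then have "measure_pmf.prob P {x. \<bar>f x - measure_pmf.expectation P f\<bar> \<ge> s} \<le>
      measure_pmf.prob P ({x. f x - measure_pmf.expectation P f \<ge> s} \<union> {x. (- f x) - measure_pmf.expectation P (\<lambda>x. - f x) \<ge> s})"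
    by (intro measure_pmf.finite_measure_mono) auto
  also have "\<dots> \<le> measure_pmf.prob P {x. f x - measure_pmf.expectation P f \<ge> s} + measure_pmf.prob P {x. (- f x) - measure_pmf.expectation P (\<lambda>x. - f x) \<ge> s}"
    by (rule measure_subadditive) auto
  finally show ?thesis using a b unfolding P_def by simp
qed



lemma adj_sym: "adj G u w = adj G w u"
  by (simp add: adj_def insert_commute)

lemma dist_ball_mono_Suc: "dist_ball G v j \<subseteq> dist_ball G v (Suc j)"
  by auto

lemma dist_ball_mono: "j \<le> j' \<Longrightarrow> dist_ball G v j \<subseteq> dist_ball G v j'"
proof (induction j' )
  case 0 then show ?case by simp
next
  case (Suc j')
  then show ?case using dist_ball_mono_Suc[of G v j'] by (cases "j = Suc j'") auto
qed

lemma dist_ball_center: "v \<in> dist_ball G v j"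
  using dist_ball_mono[of 0 j G v] by auto

lemma dist_ball_first_step:
  "s \<in> dist_ball G w (Suc j) \<Longrightarrow> \<exists>a. s \<in> dist_ball G a j \<and> (a = w \<or> (adj G w a \<and> a \<in> fst G))"
proof (induction j arbitrary: s)
  case 0
  then show ?case by auto
next
  case (Suc j)
  from Suc.prems consider "s \<in> dist_ball G w (Suc j)"
    | b where "s \<in> fst G" "b \<in> dist_ball G w (Suc j)" "adj G b s" by auto
  then show ?case
  proof cases
    case 1
    then obtain a where "s \<in> dist_ball G a j" "a = w \<or> (adj G w a \<and> a \<in> fst G)" using Suc.IH by blast
    then show ?thesis using dist_ball_mono_Suc by blast
  next
    case 2
    then obtain a where "b \<in> dist_ball G a j" "a = w \<or> (adj G w a \<and> a \<in> fst G)" using Suc.IH by blast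
    then show ?thesis using 2 by (intro exI[of _ a]) auto
  qed
qed

lemma dist_ball_sym:
  "w \<in> fst G \<Longrightarrow> s \<in> dist_ball G w j \<Longrightarrow> w \<in> dist_ball G s j"
proof (induction j arbitrary: w)
  case 0 then show ?case by simp
next
  case (Suc j)
  obtain a where a: "s \<in> dist_ball G a j" "a = w \<or> (adj G w a \<and> a \<in> fst G)"
    using dist_ball_first_step[OF Suc.prems(2)] by blast
  show ?case
  proof (cases "a = w")
    case True
    then show ?thesis using Suc.IH[OF Suc.prems(1)] a dist_ball_mono_Suc by blast
  next
    case False
    then have "adj G w a" "a \<in> fst G" using a by auto
    then have "a \<in> dist_ball G s j" using Suc.IH a by blast
    then show ?thesis using Suc.prems(1) \<open>adj G w a\<close> adj_sym[of G w a] by auto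
  qed
qed

lemma dist_ball_card:
  assumes fin: "finite (fst G)" and deg: "\<And>a. card {u\<in>fst G. adj G a u} \<le> \<Delta>"
  shows "finite (dist_ball G v j) \<and> card (dist_ball G v j) \<le> (\<Delta> + 1) ^ j"
proof (induction j)
  case 0 then show ?case by simp
next
  case (Suc j)
  let ?B = "dist_ball G v j"
  have sub: "dist_ball G v (Suc j) \<subseteq> ?B \<union> (\<Union>w\<in>?B. {u\<in>fst G. adj G w u})" by auto
  have fN: "finite {u\<in>fst G. adj G w u}" for w using fin by auto
  have finU: "finite (?B \<union> (\<Union>w\<in>?B. {u\<in>fst G. adj G w u}))" using Suc.IH fN by auto
  have "card (dist_ball G v (Suc j)) \<le> card (?B \<union> (\<Union>w\<in>?B. {u\<in>fst G. adj G w u}))"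
    by (rule card_mono[OF finU sub])
  also have "\<dots> \<le> card ?B + card (\<Union>w\<in>?B. {u\<in>fst G. adj G w u})" by (rule card_Un_le)
  also have "card (\<Union>w\<in>?B. {u\<in>fst G. adj G w u}) \<le> (\<Sum>w\<in>?B. card {u\<in>fst G. adj G w u})"
    by (rule card_UN_le) (use Suc.IH in auto)
  also have "\<dots> \<le> (\<Sum>w\<in>?B. \<Delta>)" by (intro sum_mono deg)
  also have "card ?B + \<dots> = card ?B * (\<Delta> + 1)" by simp
  also have "\<dots> \<le> (\<Delta> + 1) ^ j * (\<Delta> + 1)" using Suc.IH by (intro mult_right_mono) auto
  finally show ?case using finite_subset[OF sub finU] by (simp add: mult.commute)
qed

lemma dist_ball_local:
  assumes V: "fst G = fst G'"
    and adjeq: "\<And>a b. a \<notin> T \<Longrightarrow> b \<notin> T \<Longrightarrow> adj G a b = adj G' a b"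
    and d1: "dist_ball G w R \<inter> T = {}" and d2: "dist_ball G' w R \<inter> T = {}"
  shows "j \<le> R \<Longrightarrow> dist_ball G w j = dist_ball G' w j"
proof (induction j)
  case 0 then show ?case by simp
next
  case (Suc j)
  have IH: "dist_ball G w j = dist_ball G' w j" using Suc by simp
  have s1: "dist_ball G w (Suc j) \<subseteq> dist_ball G w R" "dist_ball G' w (Suc j) \<subseteq> dist_ball G' w R"
    using dist_ball_mono[OF Suc.prems, of G w] dist_ball_mono[OF Suc.prems, of G' w] by auto
  have s0: "dist_ball G w j \<subseteq> dist_ball G w R" using Suc.prems by (auto intro: dist_ball_mono[THEN subsetD])
  show ?case
  proof (intro equalityI subsetI)
    fix u assume u: "u \<in> dist_ball G w (Suc j)"
    then have uT: "u \<notin> T" using s1 d1 by blast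
    show "u \<in> dist_ball G' w (Suc j)"
    proof (cases "u \<in> dist_ball G w j")
      case True then show ?thesis using IH by auto
    next
      case False
      then obtain b where b: "u \<in> fst G" "b \<in> dist_ball G w j" "adj G b u" using u by auto
      then have "b \<notin> T" using s0 d1 by blast
      then have "adj G' b u" using adjeq[OF _ uT] b by simp
      then show ?thesis using b IH V by auto
    qed
  next
    fix u assume u: "u \<in> dist_ball G' w (Suc j)"
    then have uT: "u \<notin> T" using s1 d2 by blast
    show "u \<in> dist_ball G w (Suc j)"
    proof (cases "u \<in> dist_ball G' w j")
      case True then show ?thesis using IH by auto
    next
      case False
      then obtain b where b: "u \<in> fst G'" "b \<in> dist_ball G' w j" "adj G' b u" using u by auto
      then have "b \<notin> T" using s0 d1 IH by blast
      then have "adj G b u" using adjeq[OF _ uT] b by simp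
      then show ?thesis using b IH V by auto
    qed
  qed
qed

lemma rooted_iso_cong:
  assumes "fst H = fst H'" "\<And>u w. u \<in> fst H \<Longrightarrow> w \<in> fst H \<Longrightarrow> adj H u w = adj H' u w"
    "\<And>u. u \<in> fst H \<Longrightarrow> \<sigma> u = \<sigma>' u"
  shows "rooted_iso H v \<sigma> \<theta> r \<tau> = rooted_iso H' v \<sigma>' \<theta> r \<tau>"
  unfolding rooted_iso_def assms(1)[symmetric]
  by (intro ex_cong1 conj_cong refl ball_cong) (auto simp: assms)

lemma nbhd_iso_local:
  assumes V: "fst G = fst G'"
    and adjeq: "\<And>a b. a \<notin> T \<Longrightarrow> b \<notin> T \<Longrightarrow> adj G a b = adj G' a b"
    and d1: "dist_ball G w R \<inter> T = {}" and d2: "dist_ball G' w R \<inter> T = {}"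
    and col: "\<And>u. u \<notin> T \<Longrightarrow> \<sigma> u = \<sigma>' u"
  shows "rooted_iso (nbhd G w R) w \<sigma> \<theta> r \<tau> = rooted_iso (nbhd G' w R) w \<sigma>' \<theta> r \<tau>"
proof -
  have B: "dist_ball G w R = dist_ball G' w R" using dist_ball_local[OF V adjeq d1 d2] by simp
  show ?thesis
  proof (rule rooted_iso_cong)
    show "fst (nbhd G w R) = fst (nbhd G' w R)" using B V by (simp add: nbhd_def induced_def)
  next
    fix u v assume "u \<in> fst (nbhd G w R)" "v \<in> fst (nbhd G w R)"
    then have "u \<in> dist_ball G w R" "v \<in> dist_ball G w R" by (auto simp: nbhd_def induced_def)
    then have "u \<notin> T" "v \<notin> T" using d1 by auto
    then show "adj (nbhd G w R) u v = adj (nbhd G' w R) u v"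
      using adjeq[of u v] B by (simp add: nbhd_def induced_def adj_def)
  next
    fix u assume "u \<in> fst (nbhd G w R)"
    then have "u \<notin> T" using d1 by (auto simp: nbhd_def induced_def)
    then show "\<sigma> u = \<sigma>' u" by (rule col)
  qed
qed

lemma count_near:
  assumes fin: "finite (fst G)" and deg: "\<And>a. card {u\<in>fst G. adj G a u} \<le> \<Delta>" and fT: "finite T"
  shows "card {w\<in>fst G. dist_ball G w R \<inter> T \<noteq> {}} \<le> card T * (\<Delta> + 1) ^ R"
proof -
  have sub: "{w\<in>fst G. dist_ball G w R \<inter> T \<noteq> {}} \<subseteq> (\<Union>s\<in>T. dist_ball G s R)"
    using dist_ball_sym by blast
  have fb: "finite (dist_ball G s R)" for s using dist_ball_card[OF fin deg] by blast
  have "card {w\<in>fst G. dist_ball G w R \<inter> T \<noteq> {}} \<le> card (\<Union>s\<in>T. dist_ball G s R)"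
    using fb fT by (intro card_mono[OF _ sub]) auto
  also have "\<dots> \<le> (\<Sum>s\<in>T. card (dist_ball G s R))" by (rule card_UN_le[OF fT])
  also have "\<dots> \<le> (\<Sum>s\<in>T. (\<Delta> + 1) ^ R)" using dist_ball_card[OF fin deg] by (intro sum_mono) auto
  finally show ?thesis by simp
qed



definition Sing :: "nat \<Rightarrow> real set set" where "Sing n = (\<lambda>v. {v}) ` vset n"
definition Pairs :: "nat \<Rightarrow> real set set" where
  "Pairs n = {{u, w} | u w. u \<in> vset n \<and> w \<in> vset n \<and> u \<noteq> w}"
definition JJ :: "nat \<Rightarrow> real set set" where "JJ n = Sing n \<union> Pairs n"
definition Cset :: "nat \<Rightarrow> (nat \<times> nat \<times> bool) set" where "Cset k = {1..k} \<times> {1..k} \<times> {False}"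
definition DD :: "nat \<Rightarrow> real \<Rightarrow> real set \<Rightarrow> (nat \<times> nat \<times> bool) pmf" where
  "DD k p e = (if card e = 1 then pmf_of_set (Cset k) else map_pmf (\<lambda>b. (0, 0, b)) (bernoulli_pmf p))"
definition PP :: "nat \<Rightarrow> nat \<Rightarrow> real \<Rightarrow> (real set \<Rightarrow> nat \<times> nat \<times> bool) pmf" where
  "PP k n p = Pi_pmf (JJ n) (0, 0, False) (DD k p)"
definition col1 :: "nat \<Rightarrow> (real set \<Rightarrow> nat \<times> nat \<times> bool) \<Rightarrow> real \<Rightarrow> nat" where
  "col1 n x v = (if v \<in> vset n then fst (x {v}) else undefined)"
definition col2 :: "nat \<Rightarrow> (real set \<Rightarrow> nat \<times> nat \<times> bool) \<Rightarrow> real \<Rightarrow> nat" where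
  "col2 n x v = (if v \<in> vset n then fst (snd (x {v})) else undefined)"
definition coin :: "(real set \<Rightarrow> nat \<times> nat \<times> bool) \<Rightarrow> real set \<Rightarrow> bool" where
  "coin x e = snd (snd (x e))"
definition gr :: "nat \<Rightarrow> (real set \<Rightarrow> nat \<times> nat \<times> bool) \<Rightarrow> rgraph" where
  "gr n x = (vset n, {e \<in> allowed_pairs n (col1 n x) (col2 n x). coin x e})"
definition build :: "nat \<Rightarrow> (real set \<Rightarrow> nat \<times> nat \<times> bool) \<Rightarrow> rgraph \<times> (real \<Rightarrow> nat) \<times> (real \<Rightarrow> nat)" where
  "build n x = (gr n x, col1 n x, col2 n x)"

lemma finite_vset [simp]: "finite (vset n)" by (simp add: vset_def)
lemma card_vset [simp]: "card (vset n) = n"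
  by (simp add: vset_def card_image inj_on_def)
lemma finite_Sing [simp]: "finite (Sing n)" by (simp add: Sing_def)
lemma finite_Pairs [simp]: "finite (Pairs n)"
proof -
  have "Pairs n \<subseteq> (\<lambda>(u,w). {u,w}) ` (vset n \<times> vset n)" by (auto simp: Pairs_def)
  then show ?thesis by (rule finite_subset) auto
qed
lemma finite_JJ [simp]: "finite (JJ n)" by (simp add: JJ_def)
lemma card_Pairs_elem: "e \<in> Pairs n \<Longrightarrow> card e = 2" by (auto simp: Pairs_def)
lemma Sing_Pairs_disj: "Sing n \<inter> Pairs n = {}"
  by (auto simp: Sing_def Pairs_def doubleton_eq_iff)

lemma allowed_sub_Pairs: "allowed_pairs n s1 s2 \<subseteq> Pairs n"
  by (auto simp: allowed_pairs_def Pairs_def)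

lemma pmf_of_set_times:
  assumes "finite A" "A \<noteq> {}" "finite B" "B \<noteq> {}"
  shows "pmf_of_set (A \<times> B) = pair_pmf (pmf_of_set A) (pmf_of_set B)"
proof (rule pmf_eqI)
  fix z :: "'a \<times> 'b"
  obtain a b where z: "z = (a, b)" by (cases z)
  show "pmf (pmf_of_set (A \<times> B)) z = pmf (pair_pmf (pmf_of_set A) (pmf_of_set B)) z"
    using assms by (simp add: z pmf_pair card_cartesian_product indicator_def)
qed

lemma random_edges_alt:
  assumes "A \<subseteq> Pairs n"
  shows "random_edges p A = map_pmf (\<lambda>f. {e\<in>A. f e}) (Pi_pmf (Pairs n) False (\<lambda>_. bernoulli_pmf p))"
proof -
  have "Pi_pmf A False (\<lambda>_. bernoulli_pmf p) =
        map_pmf (\<lambda>f x. if x \<in> A then f x else False) (Pi_pmf (Pairs n) False (\<lambda>_. bernoulli_pmf p))"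
    by (rule Pi_pmf_subset[OF finite_Pairs assms])
  then show ?thesis unfolding random_edges_def by (simp add: pmf.map_comp o_def) (rule map_pmf_cong; auto)
qed

lemma DD_Sing: "e \<in> Sing n \<Longrightarrow> DD k p e = pmf_of_set (Cset k)"
  by (auto simp: DD_def Sing_def)
lemma DD_Pairs: "e \<in> Pairs n \<Longrightarrow> DD k p e = map_pmf (\<lambda>b. (0, 0, b)) (bernoulli_pmf p)"
  by (auto simp: DD_def card_Pairs_elem)

definition PD :: "nat \<Rightarrow> nat \<Rightarrow> (real set \<Rightarrow> nat \<times> nat \<times> bool) set" where
  "PD k n = PiE_dflt (Sing n) (0, 0, False) (\<lambda>_. Cset k)"

lemma Cset_ne: "k \<ge> 1 \<Longrightarrow> Cset k \<noteq> {}" by (auto simp: Cset_def)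
lemma finite_Cset [simp]: "finite (Cset k)" by (simp add: Cset_def)

lemma PP_split:
  assumes "k \<ge> 1"
  shows "PP k n p = map_pmf (\<lambda>(f, g) x. if x \<in> Sing n then f x else g x)
     (pair_pmf (pmf_of_set (PD k n)) (map_pmf (\<lambda>h. (\<lambda>b. (0::nat, 0::nat, b)) \<circ> h) (Pi_pmf (Pairs n) False (\<lambda>_. bernoulli_pmf p))))"
proof -
  have "PP k n p = map_pmf (\<lambda>(f, g) x. if x \<in> Sing n then f x else g x)
     (pair_pmf (Pi_pmf (Sing n) (0,0,False) (DD k p)) (Pi_pmf (Pairs n) (0,0,False) (DD k p)))"
    unfolding PP_def JJ_def by (rule Pi_pmf_union) (auto simp: Sing_Pairs_disj)
  also have "Pi_pmf (Sing n) (0,0,False) (DD k p) = Pi_pmf (Sing n) (0,0,False) (\<lambda>_. pmf_of_set (Cset k))"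
    by (intro Pi_pmf_cong) (auto simp: DD_Sing)
  also have "\<dots> = pmf_of_set (PD k n)" unfolding PD_def
    using assms Cset_ne by (intro Pi_pmf_of_set) auto
  also have "Pi_pmf (Pairs n) (0,0,False) (DD k p) = Pi_pmf (Pairs n) (0,0,False) (\<lambda>_. map_pmf (\<lambda>b. (0::nat, 0::nat, b)) (bernoulli_pmf p))"
    by (intro Pi_pmf_cong) (auto simp: DD_Pairs)
  also have "\<dots> = map_pmf (\<lambda>h. (\<lambda>b. (0::nat, 0::nat, b)) \<circ> h) (Pi_pmf (Pairs n) False (\<lambda>_. bernoulli_pmf p))"
    by (rule Pi_pmf_map) auto
  finally show ?thesis .
qed

lemma cc_image:
  assumes "k \<ge> 1"
  shows "(\<lambda>x. (col1 n x, col2 n x)) ` PD k n = col_maps n k \<times> col_maps n k"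
proof (intro equalityI subsetI)
  fix z assume "z \<in> (\<lambda>x. (col1 n x, col2 n x)) ` PD k n"
  then obtain x where x: "x \<in> PD k n" "z = (col1 n x, col2 n x)" by auto
  have "x {v} \<in> Cset k" if "v \<in> vset n" for v using x that by (auto simp: PD_def PiE_dflt_def Sing_def)
  then have "fst (x {v}) \<in> {1..k} \<and> fst (snd (x {v})) \<in> {1..k}" if "v \<in> vset n" for v
    using that unfolding Cset_def by (auto simp: mem_Times_iff)
  then show "z \<in> col_maps n k \<times> col_maps n k"
    using x by (auto simp: col_maps_def col1_def col2_def Cset_def)
next
  fix z assume z: "z \<in> col_maps n k \<times> col_maps n k"
  obtain s1 s2 where s: "z = (s1, s2)" by (cases z)
  define x where "x = (\<lambda>e. if e \<in> Sing n then (s1 (the_elem e), s2 (the_elem e), False) else (0, 0, False))"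
  have "x \<in> PD k n" using z s by (auto simp: x_def PD_def PiE_dflt_def Sing_def col_maps_def Cset_def)
  moreover have "col1 n x = s1" "col2 n x = s2" using z s
    by (auto simp: x_def col1_def col2_def Sing_def col_maps_def fun_eq_iff PiE_def extensional_def)
  ultimately show "z \<in> (\<lambda>x. (col1 n x, col2 n x)) ` PD k n" using s by auto
qed

lemma cc_inj: "inj_on (\<lambda>x. (col1 n x, col2 n x)) (PD k n)"
proof (rule inj_onI)
  fix x y assume xy: "x \<in> PD k n" "y \<in> PD k n" "(col1 n x, col2 n x) = (col1 n y, col2 n y)"
  show "x = y"
  proof
    fix e show "x e = y e"
    proof (cases "e \<in> Sing n")
      case True
      then obtain v where v: "v \<in> vset n" "e = {v}" by (auto simp: Sing_def)
      have "fst (x {v}) = fst (y {v})" "fst (snd (x {v})) = fst (snd (y {v}))"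
        using xy(3) v by (auto simp: col1_def col2_def fun_eq_iff dest: spec[of _ v])
      moreover have "x {v} \<in> Cset k" "y {v} \<in> Cset k"
        using xy v by (auto simp: PD_def PiE_dflt_def Sing_def)
      then have "snd (snd (x {v})) = False" "snd (snd (y {v})) = False"
        unfolding Cset_def by (auto simp: mem_Times_iff)
      ultimately show ?thesis using v by (simp add: prod_eq_iff)
    next
      case False
      then show ?thesis using xy by (auto simp: PD_def PiE_dflt_def)
    qed
  qed
qed

lemma finite_PD: "finite (PD k n)" unfolding PD_def by (intro finite_PiE_dflt) auto
lemma PD_ne: "k \<ge> 1 \<Longrightarrow> PD k n \<noteq> {}" unfolding PD_def using Cset_ne by auto

lemma finite_col_maps: "finite (col_maps n k)" by (simp add: col_maps_def finite_PiE)
lemma col_maps_ne: "k \<ge> 1 \<Longrightarrow> col_maps n k \<noteq> {}" by (auto simp: col_maps_def PiE_eq_empty_iff)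

lemma planted_repr:
  assumes k: "k \<ge> 1"
  shows "planted_replica k n p = map_pmf (build n) (PP k n p)"
proof -
  define B where "B = Pi_pmf (Pairs n) False (\<lambda>_. bernoulli_pmf p)"
  define U where "U = pmf_of_set (col_maps n k)"
  define H where "H = (\<lambda>(s1, s2) (f :: real set \<Rightarrow> bool).
      ((vset n, {e\<in>allowed_pairs n s1 s2. f e}), s1, s2))"
  have L: "planted_replica k n p = map_pmf (case_prod H) (pair_pmf (pair_pmf U U) B)"
    unfolding planted_replica_def random_edges_alt[OF allowed_sub_Pairs] U_def[symmetric] B_def[symmetric]
    by (simp add: pair_pmf_def map_pmf_def bind_assoc_pmf bind_return_pmf H_def)
  have UU: "pair_pmf U U = map_pmf (\<lambda>x. (col1 n x, col2 n x)) (pmf_of_set (PD k n))"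
    unfolding U_def using k
    by (subst map_pmf_of_set_inj[OF cc_inj PD_ne finite_PD])
       (simp_all add: cc_image pmf_of_set_times finite_col_maps col_maps_ne)
  have eq: "build n ((\<lambda>(f, g) x. if x \<in> Sing n then f x else g x) (apsnd ((\<circ>) (\<lambda>b. (0::nat, 0::nat, b))) z))
      = case_prod H (apfst (\<lambda>x. (col1 n x, col2 n x)) z)" for z
  proof -
    obtain x f where z: "z = (x, f)" by (cases z)
    let ?m = "\<lambda>y. if y \<in> Sing n then x y else ((\<lambda>b. (0::nat, 0::nat, b)) \<circ> f) y"
    have c1: "col1 n ?m = col1 n x" "col2 n ?m = col2 n x"
      by (auto simp: col1_def col2_def Sing_def fun_eq_iff)
    have "{e \<in> allowed_pairs n (col1 n x) (col2 n x). coin ?m e} = {e \<in> allowed_pairs n (col1 n x) (col2 n x). f e}"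
      using allowed_sub_Pairs[of n "col1 n x" "col2 n x"] Sing_Pairs_disj[of n] by (auto simp: coin_def)
    then show ?thesis using c1 by (simp add: z build_def gr_def H_def)
  qed
  have "map_pmf (build n) (PP k n p) = map_pmf (case_prod H) (pair_pmf (pair_pmf U U) B)"
    unfolding PP_split[OF k] UU B_def[symmetric] pair_map_pmf2 pair_map_pmf1 pmf.map_comp o_def eq ..
  then show ?thesis using L by simp
qed



lemma mem_allowed: "{a, b} \<in> allowed_pairs n s1 s2 \<longleftrightarrow>
   a \<in> vset n \<and> b \<in> vset n \<and> a \<noteq> b \<and> s1 a \<noteq> s1 b \<and> s2 a \<noteq> s2 b"
proof
  assume "{a, b} \<in> allowed_pairs n s1 s2"
  then obtain u w where uw: "{a, b} = {u, w}" "u \<in> vset n" "w \<in> vset n" "u \<noteq> w"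
     "s1 u \<noteq> s1 w" "s2 u \<noteq> s2 w" unfolding allowed_pairs_def by blast
  from uw(1) have "(a = u \<and> b = w) \<or> (a = w \<and> b = u)" by (simp add: doubleton_eq_iff)
  then show "a \<in> vset n \<and> b \<in> vset n \<and> a \<noteq> b \<and> s1 a \<noteq> s1 b \<and> s2 a \<noteq> s2 b"
    using uw by (elim disjE) auto
next
  assume "a \<in> vset n \<and> b \<in> vset n \<and> a \<noteq> b \<and> s1 a \<noteq> s1 b \<and> s2 a \<noteq> s2 b"
  then show "{a, b} \<in> allowed_pairs n s1 s2" unfolding allowed_pairs_def by blast
qed

lemma adj_gr: "adj (gr n x) a b \<longleftrightarrow> a \<in> vset n \<and> b \<in> vset n \<and> a \<noteq> b \<and>
   col1 n x a \<noteq> col1 n x b \<and> col2 n x a \<noteq> col2 n x b \<and> coin x {a, b}"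
  unfolding adj_def gr_def by (simp add: mem_allowed)

definition Tset :: "nat \<Rightarrow> (real set \<Rightarrow> nat \<times> nat \<times> bool) \<Rightarrow> (real set \<Rightarrow> nat \<times> nat \<times> bool) \<Rightarrow> real set" where
  "Tset n x y = {b \<in> vset n. \<exists>e\<in>JJ n. Max e = b \<and> x e \<noteq> y e}"

lemma Tset_sub: "Tset n x y \<subseteq> vset n" by (auto simp: Tset_def)
lemma finite_Tset [simp]: "finite (Tset n x y)" by (rule finite_subset[OF Tset_sub finite_vset])
lemma card_Tset: "card (Tset n x y) \<le> n"
  using card_mono[OF finite_vset Tset_sub] by simp
lemma Tset_refl [simp]: "Tset n x x = {}" by (auto simp: Tset_def)

lemma single_eq: "u \<in> vset n \<Longrightarrow> u \<notin> Tset n x y \<Longrightarrow> x {u} = y {u}"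
  by (auto simp: Tset_def JJ_def Sing_def)

lemma col_eq: "u \<notin> Tset n x y \<Longrightarrow> col1 n x u = col1 n y u \<and> col2 n x u = col2 n y u"
  by (cases "u \<in> vset n") (auto simp: col1_def col2_def single_eq)

lemma adj_local:
  assumes "a \<notin> Tset n x y" "b \<notin> Tset n x y"
  shows "adj (gr n x) a b = adj (gr n y) a b"
proof (cases "a \<in> vset n \<and> b \<in> vset n \<and> a \<noteq> b")
  case True
  have "{a,b} \<in> JJ n" using True by (auto simp: JJ_def Pairs_def)
  moreover have "Max {a,b} \<in> {a,b}" by (rule Max_in) auto
  ultimately have "x {a,b} = y {a,b}" using assms True unfolding Tset_def by auto
  then show ?thesis using col_eq[OF assms(1)] col_eq[OF assms(2)] by (simp add: adj_gr coin_def)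
next
  case False
  then show ?thesis by (auto simp: adj_gr)
qed

definition Gam :: "nat \<Rightarrow> nat \<Rightarrow> (real set \<Rightarrow> nat \<times> nat \<times> bool) set" where
  "Gam n \<Delta> = {x. \<forall>a. card {u\<in>vset n. adj (gr n x) a u} \<le> \<Delta>}"

definition Qv where
  "Qv n \<theta> r \<tau>1 \<tau>2 \<omega> x w = (of_bool (rooted_iso (nbhd (gr n x) w \<omega>) w (col1 n x) \<theta> r \<tau>1) *
      of_bool (rooted_iso (nbhd (gr n x) w \<omega>) w (col2 n x) \<theta> r \<tau>2) :: real)"

lemma Qstat_build: "Qstat n \<theta> r \<tau>1 \<tau>2 \<omega> (build n x) = (1 / real n) * (\<Sum>w\<in>vset n. Qv n \<theta> r \<tau>1 \<tau>2 \<omega> x w)"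
  by (simp add: Qstat_def build_def Qv_def)

lemma Qv_01: "0 \<le> Qv n \<theta> r \<tau>1 \<tau>2 \<omega> x w" "Qv n \<theta> r \<tau>1 \<tau>2 \<omega> x w \<le> 1"
  by (auto simp: Qv_def)

lemma Qstat_01: "0 \<le> Qstat n \<theta> r \<tau>1 \<tau>2 \<omega> (build n x)" "Qstat n \<theta> r \<tau>1 \<tau>2 \<omega> (build n x) \<le> 1"
proof -
  show "0 \<le> Qstat n \<theta> r \<tau>1 \<tau>2 \<omega> (build n x)"
    unfolding Qstat_build by (intro mult_nonneg_nonneg sum_nonneg Qv_01) auto
  have "(\<Sum>w\<in>vset n. Qv n \<theta> r \<tau>1 \<tau>2 \<omega> x w) \<le> (\<Sum>w\<in>vset n. 1)" by (intro sum_mono Qv_01)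
  then have "(\<Sum>w\<in>vset n. Qv n \<theta> r \<tau>1 \<tau>2 \<omega> x w) \<le> real n" by simp
  then show "Qstat n \<theta> r \<tau>1 \<tau>2 \<omega> (build n x) \<le> 1"
    unfolding Qstat_build by (cases "n = 0") (auto simp: field_simps)
qed

lemma Qv_local:
  assumes "dist_ball (gr n x) w \<omega> \<inter> Tset n x y = {}" "dist_ball (gr n y) w \<omega> \<inter> Tset n x y = {}"
  shows "Qv n \<theta> r \<tau>1 \<tau>2 \<omega> x w = Qv n \<theta> r \<tau>1 \<tau>2 \<omega> y w"
proof -
  have V: "fst (gr n x) = fst (gr n y)" by (simp add: gr_def)
  have A: "\<And>a b. a \<notin> Tset n x y \<Longrightarrow> b \<notin> Tset n x y \<Longrightarrow> adj (gr n x) a b = adj (gr n y) a b"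
    by (rule adj_local)
  show ?thesis unfolding Qv_def
    using nbhd_iso_local[OF V A assms, of "col1 n x" "col1 n y" \<theta> r \<tau>1]
          nbhd_iso_local[OF V A assms, of "col2 n x" "col2 n y" \<theta> r \<tau>2] col_eq
    by auto
qed

lemma F_lip:
  assumes x: "x \<in> Gam n \<Delta>" and y: "y \<in> Gam n \<Delta>"
  shows "\<bar>Qstat n \<theta> r \<tau>1 \<tau>2 \<omega> (build n x) - Qstat n \<theta> r \<tau>1 \<tau>2 \<omega> (build n y)\<bar>
         \<le> 2 * real ((\<Delta> + 1) ^ \<omega>) / real n * real (card (Tset n x y))"
proof -
  let ?T = "Tset n x y"
  let ?Q = "Qv n \<theta> r \<tau>1 \<tau>2 \<omega>"
  define N1 where "N1 = {w\<in>fst (gr n x). dist_ball (gr n x) w \<omega> \<inter> ?T \<noteq> {}}"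
  define N2 where "N2 = {w\<in>fst (gr n y). dist_ball (gr n y) w \<omega> \<inter> ?T \<noteq> {}}"
  have fg: "fst (gr n x) = vset n" "fst (gr n y) = vset n" by (simp_all add: gr_def)
  have c1: "card N1 \<le> card ?T * (\<Delta> + 1) ^ \<omega>" unfolding N1_def
    using x by (intro count_near) (auto simp: fg Gam_def)
  have c2: "card N2 \<le> card ?T * (\<Delta> + 1) ^ \<omega>" unfolding N2_def
    using y by (intro count_near) (auto simp: fg Gam_def)
  have fN: "finite N1" "finite N2" by (auto simp: N1_def N2_def fg)
  have "\<bar>(\<Sum>w\<in>vset n. ?Q x w) - (\<Sum>w\<in>vset n. ?Q y w)\<bar> = \<bar>\<Sum>w\<in>vset n. ?Q x w - ?Q y w\<bar>"
    by (simp add: sum_subtractf)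
  also have "\<dots> \<le> (\<Sum>w\<in>vset n. \<bar>?Q x w - ?Q y w\<bar>)" by (rule sum_abs)
  also have "\<dots> \<le> (\<Sum>w\<in>vset n. of_bool (w \<in> N1 \<union> N2))"
  proof (intro sum_mono)
    fix w assume w: "w \<in> vset n"
    show "\<bar>?Q x w - ?Q y w\<bar> \<le> of_bool (w \<in> N1 \<union> N2)"
    proof (cases "w \<in> N1 \<union> N2")
      case True
      then show ?thesis using Qv_01[of n \<theta> r \<tau>1 \<tau>2 \<omega> x w] Qv_01[of n \<theta> r \<tau>1 \<tau>2 \<omega> y w] by auto
    next
      case False
      then have "?Q x w = ?Q y w" using w by (intro Qv_local) (auto simp: N1_def N2_def fg)
      then show ?thesis by simp
    qed
  qed
  also have "\<dots> = real (card ((N1 \<union> N2) \<inter> vset n))"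
    by (simp add: of_bool_def sum.If_cases Un_def Int_commute)
  also have "\<dots> \<le> real (card N1 + card N2)"
    using card_Un_le[of N1 N2] card_mono[of "N1 \<union> N2" "(N1 \<union> N2) \<inter> vset n"] fN by auto
  also have "\<dots> \<le> 2 * real (card ?T) * real ((\<Delta> + 1) ^ \<omega>)"
  proof -
    have "card N1 + card N2 \<le> 2 * card ?T * (\<Delta> + 1) ^ \<omega>" using c1 c2 by linarith
    then have "real (card N1 + card N2) \<le> real (2 * card ?T * (\<Delta> + 1) ^ \<omega>)" by (rule of_nat_mono)
    then show ?thesis by simp
  qed
  finally have S: "\<bar>(\<Sum>w\<in>vset n. ?Q x w) - (\<Sum>w\<in>vset n. ?Q y w)\<bar> \<le> 2 * real (card ?T) * real ((\<Delta> + 1) ^ \<omega>)" .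
  show ?thesis
  proof (cases "n = 0")
    case True then show ?thesis by (simp add: Qstat_build)
  next
    case False
    have "\<bar>Qstat n \<theta> r \<tau>1 \<tau>2 \<omega> (build n x) - Qstat n \<theta> r \<tau>1 \<tau>2 \<omega> (build n y)\<bar>
       = \<bar>(\<Sum>w\<in>vset n. ?Q x w) - (\<Sum>w\<in>vset n. ?Q y w)\<bar> / real n"
      unfolding Qstat_build by (simp add: diff_divide_distrib[symmetric] abs_divide)
    also have "\<dots> \<le> 2 * real (card ?T) * real ((\<Delta> + 1) ^ \<omega>) / real n"
      using S False by (intro divide_right_mono) auto
    finally show ?thesis by (simp add: algebra_simps)
  qed
qed



definition ftil :: "nat \<Rightarrow> ((real set \<Rightarrow> nat \<times> nat \<times> bool) \<Rightarrow> real) \<Rightarrow> (real set \<Rightarrow> nat \<times> nat \<times> bool) set \<Rightarrow> real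
   \<Rightarrow> (real set \<Rightarrow> nat \<times> nat \<times> bool) \<Rightarrow> real" where
  "ftil n F S0 c x = Min ((\<lambda>y. F y + c * real (card (Tset n x y))) ` S0)"

lemma Tset_block:
  assumes "\<And>e. Max e \<noteq> b \<Longrightarrow> x e = x' e"
  shows "Tset n x y \<subseteq> insert b (Tset n x' y)"
proof
  fix b' assume "b' \<in> Tset n x y"
  then obtain e where e: "b' \<in> vset n" "e \<in> JJ n" "Max e = b'" "x e \<noteq> y e" unfolding Tset_def by blast
  show "b' \<in> insert b (Tset n x' y)"
  proof (cases "b' = b")
    case False
    then have "x e = x' e" using assms e(3) by auto
    then show ?thesis using e unfolding Tset_def by auto
  qed simp
qed

lemma ftil_eq:
  assumes fin: "finite S0" and x: "x \<in> S0" and lip: "\<And>y. y \<in> S0 \<Longrightarrow> F x \<le> F y + c * real (card (Tset n x y))"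
  shows "ftil n F S0 c x = F x"
  unfolding ftil_def
proof (rule antisym)
  show "Min ((\<lambda>y. F y + c * real (card (Tset n x y))) ` S0) \<le> F x"
    using x fin by (intro Min_le_iff[THEN iffD2]) (auto intro!: bexI[of _ x])
  show "F x \<le> Min ((\<lambda>y. F y + c * real (card (Tset n x y))) ` S0)"
    using x fin lip by (subst Min_ge_iff) auto
qed

lemma ftil_le:
  assumes fin: "finite S0" and ne: "S0 \<noteq> {}" and c: "c \<ge> 0"
    and agree: "\<And>e. Max e \<noteq> b \<Longrightarrow> x e = x' e"
  shows "ftil n F S0 c x \<le> ftil n F S0 c x' + c"
proof -
  have "ftil n F S0 c x' \<in> (\<lambda>y. F y + c * real (card (Tset n x' y))) ` S0"
    unfolding ftil_def using fin ne by (intro Min_in) auto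
  then obtain y where y: "y \<in> S0" "ftil n F S0 c x' = F y + c * real (card (Tset n x' y))"
    by blast
  have "card (Tset n x y) \<le> card (insert b (Tset n x' y))"
    by (intro card_mono Tset_block agree) auto
  also have "\<dots> \<le> card (Tset n x' y) + 1" by (simp add: card_insert_if)
  finally have "real (card (Tset n x y)) \<le> real (card (Tset n x' y)) + 1" by linarith
  then have "c * real (card (Tset n x y)) \<le> c * (real (card (Tset n x' y)) + 1)"
    using c by (rule mult_left_mono)
  then have "F y + c * real (card (Tset n x y)) \<le> ftil n F S0 c x' + c"
    using y by (simp add: algebra_simps)
  moreover have "ftil n F S0 c x \<le> F y + c * real (card (Tset n x y))"
    unfolding ftil_def using fin y(1) by (intro Min_le) auto
  ultimately show ?thesis by linarith
qed

lemma ftil_lip: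
  assumes fin: "finite S0" and ne: "S0 \<noteq> {}" and c: "c \<ge> 0"
    and agree: "\<And>e. Max e \<noteq> b \<Longrightarrow> x e = x' e"
  shows "\<bar>ftil n F S0 c x - ftil n F S0 c x'\<bar> \<le> c"
proof -
  have a: "ftil n F S0 c x \<le> ftil n F S0 c x' + c" by (rule ftil_le[OF fin ne c agree])
  have b: "ftil n F S0 c x' \<le> ftil n F S0 c x + c" using agree by (intro ftil_le[OF fin ne c, of b]) metis
  show ?thesis using a b by linarith
qed

lemma ftil_bounds:
  assumes fin: "finite S0" and ne: "S0 \<noteq> {}" and c: "c \<ge> 0"
    and F01: "\<And>y. y \<in> S0 \<Longrightarrow> 0 \<le> F y \<and> F y \<le> 1"
  shows "0 \<le> ftil n F S0 c x \<and> ftil n F S0 c x \<le> 1 + c * real n"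
proof
  show "0 \<le> ftil n F S0 c x" unfolding ftil_def using fin ne F01 c
    by (subst Min_ge_iff) auto
  obtain y where y: "y \<in> S0" using ne by auto
  have "ftil n F S0 c x \<le> F y + c * real (card (Tset n x y))"
    unfolding ftil_def using fin y by (intro Min_le) auto
  also have "\<dots> \<le> 1 + c * real n"
    using F01[OF y] card_Tset[of n x y] c by (intro add_mono mult_left_mono) auto
  finally show "ftil n F S0 c x \<le> 1 + c * real n" .
qed



lemma prob_coins:
  assumes p: "0 \<le> p" "p \<le> 1" and a: "a \<in> vset n" and W: "W \<subseteq> vset n - {a}"
  shows "measure_pmf.prob (PP k n p) {x. \<forall>u\<in>W. coin x {a, u}} = p ^ card W"
proof -
  define EW where "EW = (\<lambda>u. {a, u}) ` W"
  have EWP: "EW \<subseteq> Pairs n"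
  proof
    fix e assume "e \<in> EW"
    then obtain u where u: "u \<in> W" "e = {a, u}" by (auto simp: EW_def)
    then show "e \<in> Pairs n" using a W unfolding Pairs_def by blast
  qed
  have EWJ: "EW \<subseteq> JJ n" using EWP by (auto simp: JJ_def)
  have cEW: "card EW = card W" unfolding EW_def
    using W by (intro card_image) (auto simp: inj_on_def doubleton_eq_iff)
  define B where "B = (\<lambda>e. if e \<in> EW then {z :: nat \<times> nat \<times> bool. snd (snd z)} else UNIV)"
  have S: "{x. \<forall>u\<in>W. coin x {a, u}} = Pi (JJ n) B"
    using EWJ by (auto simp: B_def EW_def coin_def Pi_def)
  have "measure_pmf.prob (PP k n p) (Pi (JJ n) B) = (\<Prod>e\<in>JJ n. measure_pmf.prob (DD k p e) (B e))"
    unfolding PP_def by (rule measure_Pi_pmf_Pi) simp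
  also have "\<dots> = (\<Prod>e\<in>EW. measure_pmf.prob (DD k p e) (B e))"
    using EWJ by (intro prod.mono_neutral_right) (auto simp: B_def)
  also have "\<dots> = (\<Prod>e\<in>EW. p)"
  proof (intro prod.cong refl)
    fix e assume e: "e \<in> EW"
    have DDe: "DD k p e = map_pmf (\<lambda>b. (0, 0, b)) (bernoulli_pmf p)" using EWP e by (intro DD_Pairs) auto
    have "measure_pmf.prob (DD k p e) (B e) = measure_pmf.prob (bernoulli_pmf p) {True}"
    proof -
      have "{x::bool. x} = {True}" by auto
      then show ?thesis using e DDe by (simp add: B_def vimage_def)
    qed
    also have "\<dots> = p" using p by (simp add: measure_pmf_single)
    finally show "measure_pmf.prob (DD k p e) (B e) = p" .
  qed
  finally show ?thesis using S cEW by simp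
qed

lemma deg_le_coins:
  "card {u\<in>vset n. adj (gr n x) a u} \<le> card {u\<in>vset n - {a}. coin x {a, u}}"
  by (intro card_mono) (auto simp: adj_gr)

lemma bad_prob:
  assumes p: "0 \<le> p" "p \<le> 1"
  shows "measure_pmf.prob (PP k n p) (- Gam n \<Delta>) \<le> real n * (real n * p) ^ Suc \<Delta> / fact (Suc \<Delta>)"
proof -
  let ?m = "Suc \<Delta>"
  define Ws where "Ws = (\<lambda>a. {W. W \<subseteq> vset n - {a} \<and> card W = ?m})"
  define Ev where "Ev = (\<lambda>a W. {x. \<forall>u\<in>W. coin x {a, u}})"
  have fWs: "finite (Ws a)" for a unfolding Ws_def
    by (rule finite_subset[of _ "Pow (vset n)"]) auto
  have sub: "- Gam n \<Delta> \<subseteq> (\<Union>a\<in>vset n. \<Union>W\<in>Ws a. Ev a W)"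
  proof
    fix x assume "x \<in> - Gam n \<Delta>"
    then obtain a where "\<not> card {u\<in>vset n. adj (gr n x) a u} \<le> \<Delta>" by (auto simp: Gam_def)
    then have big: "?m \<le> card {u\<in>vset n - {a}. coin x {a, u}}" using deg_le_coins[of n x a] by linarith
    have a: "a \<in> vset n"
    proof (rule ccontr)
      assume "a \<notin> vset n"
      then have "{u\<in>vset n. adj (gr n x) a u} = {}" by (auto simp: adj_gr)
      then have "card {u\<in>vset n. adj (gr n x) a u} = 0" by (simp only: card.empty)
      then show False
        using \<open>\<not> card {u\<in>vset n. adj (gr n x) a u} \<le> \<Delta>\<close> by linarith
    qed
    obtain W where W: "W \<subseteq> {u\<in>vset n - {a}. coin x {a, u}}" "card W = ?m"
      using big by (rule obtain_subset_with_card_n)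
    then have "W \<in> Ws a" "x \<in> Ev a W" by (auto simp: Ws_def Ev_def)
    then show "x \<in> (\<Union>a\<in>vset n. \<Union>W\<in>Ws a. Ev a W)" using a by blast
  qed
  have "measure_pmf.prob (PP k n p) (- Gam n \<Delta>) \<le> measure_pmf.prob (PP k n p) (\<Union>a\<in>vset n. \<Union>W\<in>Ws a. Ev a W)"
    using sub by (intro measure_pmf.finite_measure_mono) auto
  also have "\<dots> \<le> (\<Sum>a\<in>vset n. measure_pmf.prob (PP k n p) (\<Union>W\<in>Ws a. Ev a W))"
    by (intro measure_UNION_le) auto
  also have "\<dots> \<le> (\<Sum>a\<in>vset n. (\<Sum>W\<in>Ws a. measure_pmf.prob (PP k n p) (Ev a W)))"
    by (intro sum_mono measure_UNION_le fWs) auto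
  also have "\<dots> = (\<Sum>a\<in>vset n. (\<Sum>W\<in>Ws a. p ^ ?m))"
    using p by (intro sum.cong refl) (auto simp: Ev_def Ws_def prob_coins)
  also have "\<dots> = (\<Sum>a\<in>vset n. real ((n - 1) choose ?m) * p ^ ?m)"
  proof (intro sum.cong refl)
    fix a assume a: "a \<in> vset n"
    have "card (Ws a) = card (vset n - {a}) choose ?m" unfolding Ws_def by (rule n_subsets) simp
    also have "card (vset n - {a}) = n - 1" using a by simp
    finally show "(\<Sum>W\<in>Ws a. p ^ ?m) = real ((n - 1) choose ?m) * p ^ ?m" by simp
  qed
  also have "\<dots> = real n * (real ((n - 1) choose ?m) * p ^ ?m)" by simp
  also have "\<dots> \<le> real n * ((real n * p) ^ ?m / fact ?m)"
  proof (intro mult_left_mono)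
    have "((n - 1) choose ?m) * fact ?m \<le> (n - 1) ^ ?m" by (rule binomial_fact_pow)
    also have "\<dots> \<le> n ^ ?m" by (intro power_mono) auto
    finally have "real ((n - 1) choose ?m) * fact ?m \<le> real n ^ ?m"
      by (metis of_nat_fact of_nat_le_iff of_nat_mult of_nat_power)
    moreover have fpos: "(fact ?m :: real) > 0" by simp
    ultimately have "real ((n - 1) choose ?m) \<le> real n ^ ?m / fact ?m"
      by (subst pos_le_divide_eq) auto
    then have "real ((n - 1) choose ?m) * p ^ ?m \<le> real n ^ ?m / fact ?m * p ^ ?m"
      using p by (intro mult_right_mono) auto
    then show "real ((n - 1) choose ?m) * p ^ ?m \<le> (real n * p) ^ ?m / fact ?m"
      by (simp add: power_mult_distrib mult_ac)
  qed simp
  finally show ?thesis by simp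
qed



lemma finite_set_DD: "k \<ge> 1 \<Longrightarrow> finite (set_pmf (DD k p e))"
  by (auto simp: DD_def Cset_ne)

lemma finite_set_PP: "k \<ge> 1 \<Longrightarrow> finite (set_pmf (PP k n p))"
  unfolding PP_def by (intro finite_set_Pi_pmf finite_JJ finite_set_DD)

lemma Max_JJ: "e \<in> JJ n \<Longrightarrow> Max e \<in> vset n"
proof -
  assume e: "e \<in> JJ n"
  then have "finite e" "e \<noteq> {}" "e \<subseteq> vset n" by (auto simp: JJ_def Sing_def Pairs_def)
  then show ?thesis using Max_in by blast
qed

lemma prob_mono_supp:
  assumes "\<And>x. x \<in> set_pmf M \<Longrightarrow> x \<in> A \<Longrightarrow> x \<in> B"
  shows "measure_pmf.prob M A \<le> measure_pmf.prob M B"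
proof -
  have "measure_pmf.prob M A = measure_pmf.prob M (A \<inter> set_pmf M)" by (simp add: measure_Int_set_pmf)
  also have "\<dots> \<le> measure_pmf.prob M B" using assms by (intro measure_pmf.finite_measure_mono) auto
  finally show ?thesis .
qed

lemma core:
  fixes k n :: nat and pn t :: real and \<Delta> :: nat
  defines "m \<equiv> Suc \<Delta>"
  defines "\<beta> \<equiv> real n * (real n * pn) ^ m / fact m"
  assumes k: "k \<ge> 1" and p: "0 \<le> pn" "pn \<le> 1" and n: "n > 0" and t: "t > 0"
    and \<beta>1: "\<beta> < 1" and \<beta>2: "\<beta> * (1 + 2 * real m ^ \<omega>) \<le> t / 2"
  shows "measure_pmf.prob (planted_replica k n pn)
      {X. \<bar>Qstat n \<theta> r \<tau>1 \<tau>2 \<omega> X -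
            measure_pmf.expectation (planted_replica k n pn) (Qstat n \<theta> r \<tau>1 \<tau>2 \<omega>)\<bar> > t}
    \<le> \<beta> + 2 * exp (- (t / 2)\<^sup>2 / (2 * (real n * (2 * real m ^ \<omega> / real n)\<^sup>2)))"
proof -
  define P where "P = PP k n pn"
  define F where "F = (\<lambda>x. Qstat n \<theta> r \<tau>1 \<tau>2 \<omega> (build n x))"
  define E where "E = measure_pmf.expectation P F"
  define c where "c = 2 * real m ^ \<omega> / real n"
  have c0: "c > 0" using n by (simp add: c_def m_def)
  define S0 where "S0 = Gam n \<Delta> \<inter> set_pmf P"
  have finP: "finite (set_pmf P)" unfolding P_def using k by (rule finite_set_PP)
  have fS0: "finite S0" using finP by (simp add: S0_def)
  have bad: "measure_pmf.prob P (- Gam n \<Delta>) \<le> \<beta>"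
    unfolding P_def \<beta>_def m_def using p by (rule bad_prob)
  have S0ne: "S0 \<noteq> {}"
  proof
    assume "S0 = {}"
    then have "measure_pmf.prob P (Gam n \<Delta>) = 0"
      by (metis S0_def measure_Int_set_pmf measure_empty)
    then have "measure_pmf.prob P (- Gam n \<Delta>) = 1"
      using measure_pmf.prob_compl[of "Gam n \<Delta>" P] by (simp add: Compl_eq_Diff_UNIV)
    then show False using bad \<beta>1 by simp
  qed
  have F01: "0 \<le> F y \<and> F y \<le> 1" for y unfolding F_def using Qstat_01 by blast
  have lip0: "F x \<le> F y + c * real (card (Tset n x y))" if "x \<in> S0" "y \<in> S0" for x y
  proof -
    have "\<bar>F x - F y\<bar> \<le> 2 * real ((\<Delta> + 1) ^ \<omega>) / real n * real (card (Tset n x y))"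
      unfolding F_def using that by (intro F_lip) (auto simp: S0_def)
    then show ?thesis by (simp add: c_def m_def)
  qed
  define g where "g = ftil n F S0 c"
  have gF: "g x = F x" if "x \<in> S0" for x
    unfolding g_def using fS0 that lip0 by (intro ftil_eq) auto
  have g01: "0 \<le> g x \<and> g x \<le> 1 + c * real n" for x
    unfolding g_def using fS0 S0ne c0 F01 by (intro ftil_bounds) auto
  define Eg where "Eg = measure_pmf.expectation P g"
  have diffbound: "\<bar>F x - g x\<bar> \<le> (1 + c * real n) * indicator (- Gam n \<Delta>) x" if "x \<in> set_pmf P" for x
  proof (cases "x \<in> Gam n \<Delta>")
    case True then show ?thesis using gF[of x] that by (simp add: S0_def)
  next
    case False
    have "0 \<le> c * real n" using c0 by simp
    then show ?thesis using False F01[of x] g01[of x] by (auto simp: abs_le_iff)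
  qed
  have "\<bar>E - Eg\<bar> = \<bar>measure_pmf.expectation P (\<lambda>x. F x - g x)\<bar>"
    unfolding E_def Eg_def using finP by (subst Bochner_Integration.integral_diff) (auto intro: integrable_measure_pmf_finite)
  also have "\<dots> \<le> measure_pmf.expectation P (\<lambda>x. \<bar>F x - g x\<bar>)" by (rule integral_abs_bound)
  also have "\<dots> \<le> measure_pmf.expectation P (\<lambda>x. (1 + c * real n) * indicator (- Gam n \<Delta>) x)"
    using finP diffbound by (intro integral_mono_AE AE_pmfI) (auto intro: integrable_measure_pmf_finite)
  also have "\<dots> = (1 + c * real n) * measure_pmf.prob P (- Gam n \<Delta>)" by simp
  also have "\<dots> \<le> (1 + c * real n) * \<beta>" using bad c0 by (intro mult_left_mono) auto
  also have "\<dots> \<le> t / 2" using \<beta>2 n by (simp add: c_def algebra_simps)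
  finally have EEg: "\<bar>E - Eg\<bar> \<le> t / 2" .
  have mcd: "measure_pmf.prob P {x. \<bar>g x - Eg\<bar> \<ge> t / 2} \<le> 2 * exp (- (t / 2)\<^sup>2 / (2 * (real n * c\<^sup>2)))"
    unfolding P_def PP_def Eg_def
  proof (rule mcdiarmid_pi[where K = "vset n" and blk = Max and c = "\<lambda>_. c"])
    show "\<And>b x y. b \<in> vset n \<Longrightarrow> (\<And>i. Max i \<noteq> b \<Longrightarrow> x i = y i) \<Longrightarrow> \<bar>g x - g y\<bar> \<le> c"
      unfolding g_def using fS0 S0ne c0 by (intro ftil_lip) auto
    show "(\<Sum>b\<in>vset n. c\<^sup>2) \<le> real n * c\<^sup>2" by simp
    show "0 < real n * c\<^sup>2" using n c0 by simp
  qed (use t Max_JJ finite_set_DD[OF k] in auto)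
  have "measure_pmf.prob P {x. \<bar>F x - E\<bar> > t} \<le> measure_pmf.prob P (- Gam n \<Delta> \<union> {x. \<bar>g x - Eg\<bar> \<ge> t / 2})"
  proof (rule prob_mono_supp)
    fix x assume x: "x \<in> set_pmf P" "x \<in> {x. \<bar>F x - E\<bar> > t}"
    show "x \<in> - Gam n \<Delta> \<union> {x. \<bar>g x - Eg\<bar> \<ge> t / 2}"
    proof (cases "x \<in> Gam n \<Delta>")
      case True
      then have "g x = F x" using x by (intro gF) (auto simp: S0_def)
      have "\<bar>F x - E\<bar> \<le> \<bar>F x - Eg\<bar> + \<bar>E - Eg\<bar>" by arith
      then show ?thesis using x EEg \<open>g x = F x\<close> by auto
    qed simp
  qed
  also have "\<dots> \<le> measure_pmf.prob P (- Gam n \<Delta>) + measure_pmf.prob P {x. \<bar>g x - Eg\<bar> \<ge> t / 2}"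
    by (rule measure_subadditive) auto
  also have "\<dots> \<le> \<beta> + 2 * exp (- (t / 2)\<^sup>2 / (2 * (real n * c\<^sup>2)))"
    using bad mcd by linarith
  finally have main: "measure_pmf.prob P {x. \<bar>F x - E\<bar> > t} \<le> \<beta> + 2 * exp (- (t / 2)\<^sup>2 / (2 * (real n * c\<^sup>2)))" .
  have rep: "planted_replica k n pn = map_pmf (build n) P" unfolding P_def by (rule planted_repr[OF k])
  have "measure_pmf.expectation (planted_replica k n pn) (Qstat n \<theta> r \<tau>1 \<tau>2 \<omega>) = E"
    unfolding rep E_def F_def by simp
  then show ?thesis using main unfolding rep by (simp add: F_def c_def)
qed



lemma pow_le_exp: assumes "(x::real) \<ge> 0" shows "x ^ q \<le> fact q * exp x"
proof -
  have s: "(\<lambda>n. x ^ n /\<^sub>R fact n) sums exp x" by (rule exp_converges)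
  have "(\<Sum>n\<in>{q}. x ^ n /\<^sub>R fact n) \<le> (\<Sum>n. x ^ n /\<^sub>R fact n)"
    using s assms by (intro sum_le_suminf) (auto simp: sums_iff)
  also have "\<dots> = exp x" using s by (simp add: sums_iff)
  finally have "x ^ q / fact q \<le> exp x" by (simp add: divide_inverse mult.commute)
  then show ?thesis by (simp add: divide_le_eq mult.commute)
qed

lemma poly_exp6: assumes "(L::real) \<ge> 0" shows "L ^ q \<le> (6 ^ q * fact q) * exp (L / 6)"
proof -
  have "(L / 6) ^ q \<le> fact q * exp (L / 6)" using assms by (intro pow_le_exp) auto
  then have "6 ^ q * (L / 6) ^ q \<le> 6 ^ q * (fact q * exp (L / 6))" by (intro mult_left_mono) auto
  then show ?thesis by (simp add: power_divide mult_ac)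
qed

lemma beta_bound:
  fixes n m :: nat and pn K1 :: real
  assumes pn: "0 \<le> pn" "real n * pn \<le> K1" and K1: "K1 > 0" and m: "exp 2 * K1 \<le> real m"
  shows "real n * (real n * pn) ^ m / fact m \<le> real n * exp (- real m)"
proof -
  have m0: "real m > 0" using m K1 by (smt (verit) exp_gt_zero mult_pos_pos)
  have f1: "real m ^ m \<le> fact m * exp (real m)" by (rule pow_le_exp) simp
  have "(real n * pn) ^ m \<le> K1 ^ m" using pn by (intro power_mono) auto
  also have "K1 \<le> real m * exp (-2)" using m by (simp add: exp_minus field_simps)
  then have "K1 ^ m \<le> (real m * exp (-2)) ^ m" using K1 by (intro power_mono) auto
  also have "\<dots> = real m ^ m * exp (- real m) * exp (- real m)"
    by (simp add: power_mult_distrib exp_of_nat_mult[symmetric] mult_exp_exp)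
  also have "\<dots> \<le> fact m * exp (real m) * exp (- real m) * exp (- real m)"
    using f1 by (intro mult_right_mono) auto
  also have "\<dots> = fact m * exp (- real m)" by (simp add: exp_minus)
  finally have "(real n * pn) ^ m \<le> fact m * exp (- real m)" .
  then have "(real n * pn) ^ m / fact m \<le> exp (- real m)" by (simp add: divide_le_eq mult.commute)
  then have "real n * ((real n * pn) ^ m / fact m) \<le> real n * exp (- real m)" by (intro mult_left_mono) auto
  then show ?thesis by simp
qed

lemma final_point:
  fixes n M0 \<omega> k :: nat and pn K1 :: real
  defines "L \<equiv> ln (real n)"
  defines "m \<equiv> Suc (nat \<lceil>L\<^sup>2\<rceil> + M0)"
  defines "C2 \<equiv> 6 ^ (2 * \<omega>) * fact (2 * \<omega>) :: real"
  defines "C4 \<equiv> 6 ^ (4 * \<omega> + 2) * fact (4 * \<omega> + 2) :: real"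
  assumes k: "k \<ge> 1" and n: "n > 0" and pn: "0 \<le> pn" "pn \<le> 1" "real n * pn \<le> K1"
    and K1: "K1 > 0" and M0: "exp 2 * K1 \<le> real M0"
    and L4: "L \<ge> 4" and LM: "L \<ge> real M0 + 2" and LC2: "L \<ge> ln (6 * 2 ^ \<omega> * C2)"
    and LC4: "L \<ge> 6 * ln (32 * 4 ^ \<omega> * C4)"
  shows "measure_pmf.prob (planted_replica k n pn)
      {X. \<bar>Qstat n \<theta> r \<tau>1 \<tau>2 \<omega> X -
            measure_pmf.expectation (planted_replica k n pn) (Qstat n \<theta> r \<tau>1 \<tau>2 \<omega>)\<bar>
          > real n powr (-1/3)}
    \<le> exp (- (1/2) * L\<^sup>2)"
proof -
  define t where "t = real n powr (-1/3)"
  define \<beta> where "\<beta> = real n * (real n * pn) ^ m / fact m"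
  define mw where "mw = real m ^ \<omega>"
  have nL: "real n = exp L" using n by (simp add: L_def)
  have tL: "t = exp (- L / 3)" using n by (simp add: t_def powr_def L_def)
  have t0: "t > 0" by (simp add: tL)
  have L0: "L \<ge> 0" using L4 by simp
  have LL: "L\<^sup>2 \<ge> 4 * L" using L4 by (simp add: power2_eq_square mult_right_mono)
  have C2pos: "C2 > 0" and C4pos: "C4 > 0" by (simp_all add: C2_def C4_def)
  have mge: "real m \<ge> L\<^sup>2"
  proof -
    have "L\<^sup>2 \<le> real (nat \<lceil>L\<^sup>2\<rceil>)" by linarith
    then show ?thesis unfolding m_def of_nat_Suc of_nat_add by linarith
  qed
  have mM0: "real m \<ge> real M0" unfolding m_def of_nat_Suc of_nat_add
    using of_nat_0_le_iff[of "nat \<lceil>L\<^sup>2\<rceil>"] by linarith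
  have mle: "real m \<le> 2 * L\<^sup>2"
  proof -
    have "real (nat \<lceil>L\<^sup>2\<rceil>) \<le> L\<^sup>2 + 1" using of_int_ceiling_le_add_one[of "L\<^sup>2"] by simp
    then have "real m \<le> L\<^sup>2 + real M0 + 2" unfolding m_def of_nat_Suc of_nat_add by linarith
    also have "\<dots> \<le> L\<^sup>2 + L" using LM by simp
    also have "\<dots> \<le> 2 * L\<^sup>2" using LL L0 by simp
    finally show ?thesis .
  qed
  have \<beta>1: "\<beta> \<le> exp (L - L\<^sup>2)"
  proof -
    have "\<beta> \<le> real n * exp (- real m)" unfolding \<beta>_def
      using pn K1 M0 mM0 by (intro beta_bound[OF pn(1) pn(3) K1]) (smt (verit) mult_left_mono exp_gt_zero)
    also have "\<dots> \<le> exp L * exp (- L\<^sup>2)" using mge nL by simp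
    also have "\<dots> = exp (L - L\<^sup>2)" by (simp add: exp_add[symmetric])
    finally show ?thesis .
  qed
  have "m \<ge> 1" by (simp add: m_def)
  then have "real m \<ge> 1" by simp
  then have mw1: "mw \<ge> 1" unfolding mw_def by (rule one_le_power)
  have mwL: "mw \<le> 2 ^ \<omega> * L ^ (2 * \<omega>)"
  proof -
    have "mw \<le> (2 * L\<^sup>2) ^ \<omega>" unfolding mw_def using mle by (intro power_mono) auto
    also have "\<dots> = 2 ^ \<omega> * L ^ (2 * \<omega>)" by (simp add: power_mult_distrib power_mult)
    finally show ?thesis .
  qed
  have P2: "L ^ (2 * \<omega>) \<le> C2 * exp (L / 6)" unfolding C2_def using poly_exp6[OF L0] by simp
  have P4: "L ^ (4 * \<omega> + 2) \<le> C4 * exp (L / 6)" unfolding C4_def by (rule poly_exp6[OF L0])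
  have "L < L\<^sup>2" using LL L4 by linarith
  then have E1: "exp (L - L\<^sup>2) < 1" by simp
  have E2: "\<beta> * (1 + 2 * mw) \<le> t / 2"
  proof -
    have "\<beta> * (1 + 2 * mw) \<le> exp (L - L\<^sup>2) * (3 * mw)"
      using \<beta>1 mw1 by (intro mult_mono) (auto simp: \<beta>_def)
    also have "\<dots> \<le> exp (L - L\<^sup>2) * (3 * (2 ^ \<omega> * (C2 * exp (L / 6))))"
      using mwL P2 by (intro mult_left_mono) (auto intro: order.trans mult_left_mono)
    also have "\<dots> = (6 * 2 ^ \<omega> * C2) * exp (L - L\<^sup>2 + L / 6 + L / 3) * (t / 2)"
      by (simp add: tL exp_add[symmetric] exp_diff exp_minus field_simps)
    also have "\<dots> \<le> exp L * exp (- L) * (t / 2)"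
    proof (intro mult_right_mono mult_mono)
      show "6 * 2 ^ \<omega> * C2 \<le> exp L"
        using LC2 C2pos by (metis exp_le_cancel_iff exp_ln mult_pos_pos zero_less_numeral zero_less_power)
      have "L - L\<^sup>2 + L / 6 + L / 3 \<le> - L" using LL L0 by linarith
      then show "exp (L - L\<^sup>2 + L / 6 + L / 3) \<le> exp (- L)" by simp
    qed (auto simp: t0 less_imp_le)
    also have "\<dots> = t / 2" by (simp add: exp_minus)
    finally show ?thesis .
  qed
  have core': "measure_pmf.prob (planted_replica k n pn)
      {X. \<bar>Qstat n \<theta> r \<tau>1 \<tau>2 \<omega> X -
            measure_pmf.expectation (planted_replica k n pn) (Qstat n \<theta> r \<tau>1 \<tau>2 \<omega>)\<bar> > t}
    \<le> \<beta> + 2 * exp (- (t / 2)\<^sup>2 / (2 * (real n * (2 * real m ^ \<omega> / real n)\<^sup>2)))"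
  proof -
    have b1: "\<beta> < 1" using \<beta>1 E1 by linarith
    have b2: "\<beta> * (1 + 2 * real m ^ \<omega>) \<le> t / 2" using E2 by (simp add: mw_def)
    show ?thesis
      using core[OF k pn(1,2) n t0 b1[unfolded \<beta>_def m_def] b2[unfolded \<beta>_def m_def]]
      unfolding \<beta>_def m_def .
  qed
  have X: "(t / 2)\<^sup>2 / (2 * (real n * (2 * real m ^ \<omega> / real n)\<^sup>2)) = exp (L / 3) / (32 * mw\<^sup>2)"
  proof -
    have gen: "(a / 2)\<^sup>2 / (2 * (b * (2 * w / b)\<^sup>2)) = a * a * b / (32 * w\<^sup>2)"
      if "b > 0" "w > 0" for a b w :: real
      using that by (simp add: field_simps power2_eq_square)
    have "L / 3 = - L / 3 + - L / 3 + L" by linarith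
    then have e: "exp (L / 3) = exp (- L / 3) * exp (- L / 3) * exp L" by (simp only: mult_exp_exp)
    have "(t / 2)\<^sup>2 / (2 * (real n * (2 * real m ^ \<omega> / real n)\<^sup>2))
        = exp (- L / 3) * exp (- L / 3) * exp L / (32 * mw\<^sup>2)"
      unfolding tL nL mw_def[symmetric] using mw1 by (intro gen) auto
    then show ?thesis using e by simp
  qed
  have XL: "exp (L / 3) / (32 * mw\<^sup>2) \<ge> L\<^sup>2"
  proof -
    have "mw\<^sup>2 \<le> (2 ^ \<omega> * L ^ (2 * \<omega>))\<^sup>2" using mwL mw1 by (intro power_mono) auto
    also have "\<dots> = ((2::real) ^ \<omega> * 2 ^ \<omega>) * (L ^ (2 * \<omega>) * L ^ (2 * \<omega>))"
      by (simp add: power2_eq_square mult_ac)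
    also have "(2::real) ^ \<omega> * 2 ^ \<omega> = 4 ^ \<omega>" by (simp add: power_mult_distrib[symmetric])
    also have "L ^ (2 * \<omega>) * L ^ (2 * \<omega>) = L ^ (4 * \<omega>)" by (simp add: power_add[symmetric])
    finally have "32 * mw\<^sup>2 * L\<^sup>2 \<le> 32 * (4 ^ \<omega> * L ^ (4 * \<omega>)) * L\<^sup>2" by (intro mult_right_mono) auto
    also have "\<dots> = 32 * 4 ^ \<omega> * L ^ (4 * \<omega> + 2)" by (simp add: power_add power2_eq_square)
    also have "\<dots> \<le> 32 * 4 ^ \<omega> * (C4 * exp (L / 6))" using P4 by (intro mult_left_mono) auto
    also have "\<dots> = (32 * 4 ^ \<omega> * C4) * exp (L / 6)" by simp
    also have "\<dots> \<le> exp (L / 6) * exp (L / 6)"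
    proof (intro mult_right_mono)
      have "ln (32 * 4 ^ \<omega> * C4) \<le> L / 6" using LC4 by simp
      then show "32 * 4 ^ \<omega> * C4 \<le> exp (L / 6)"
        using C4pos by (metis exp_le_cancel_iff exp_ln mult_pos_pos zero_less_numeral zero_less_power)
    qed simp
    also have "\<dots> = exp (L / 3)" by (simp add: exp_add[symmetric])
    finally have "32 * mw\<^sup>2 * L\<^sup>2 \<le> exp (L / 3)" .
    moreover have "32 * mw\<^sup>2 > 0" using mw1 by simp
    ultimately show ?thesis by (simp add: le_divide_eq mult.commute)
  qed
  have "\<beta> + 2 * exp (- (exp (L / 3) / (32 * mw\<^sup>2))) \<le> exp (L - L\<^sup>2) + 2 * exp (- L\<^sup>2)"
  proof -
    have "exp (- (exp (L / 3) / (32 * mw\<^sup>2))) \<le> exp (- L\<^sup>2)" using XL by simp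
    then show ?thesis using \<beta>1 by linarith
  qed
  also have "\<dots> = exp (- L\<^sup>2) * (exp L + 2)" by (simp add: exp_diff exp_minus field_simps)
  also have "\<dots> \<le> exp (- L\<^sup>2) * exp (L\<^sup>2 / 2)"
  proof (intro mult_left_mono)
    have "exp L \<ge> 1" using L0 by simp
    then have "exp L + 2 \<le> 3 * exp L" by linarith
    also have "\<dots> \<le> exp 4 * exp L" using exp_ge_add_one_self[of 4] by (intro mult_right_mono) auto
    also have "\<dots> = exp (L + 4)" by (simp add: exp_add)
    also have "\<dots> \<le> exp (L\<^sup>2 / 2)" using LL L4 by simp
    finally show "exp L + 2 \<le> exp (L\<^sup>2 / 2)" .
  qed simp
  also have "\<dots> = exp (- (1/2) * L\<^sup>2)" by (simp add: exp_add[symmetric])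
  finally have fin: "\<beta> + 2 * exp (- (exp (L / 3) / (32 * mw\<^sup>2))) \<le> exp (- (1/2) * L\<^sup>2)" .
  have "measure_pmf.prob (planted_replica k n pn)
      {X. \<bar>Qstat n \<theta> r \<tau>1 \<tau>2 \<omega> X -
            measure_pmf.expectation (planted_replica k n pn) (Qstat n \<theta> r \<tau>1 \<tau>2 \<omega>)\<bar> > t}
    \<le> \<beta> + 2 * exp (- (exp (L / 3) / (32 * mw\<^sup>2)))"
  proof -
    have X2: "- (t / 2)\<^sup>2 / (2 * (real n * (2 * real m ^ \<omega> / real n)\<^sup>2)) = - (exp (L / 3) / (32 * mw\<^sup>2))"
      by (subst X[symmetric]) (rule minus_divide_left[symmetric])
    show ?thesis using core' by (simp only: X2)
  qed
  then show ?thesis using fin unfolding t_def by linarith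
qed



theorem lemma4p4:
  fixes k :: nat and p :: "nat \<Rightarrow> real" and \<theta> :: rgraph and r :: real
    and \<tau>1 \<tau>2 :: "real \<Rightarrow> nat" and \<omega> :: nat
  assumes "k \<ge> 3"
    and "\<forall>n. 0 \<le> p n"
    and "p \<in> O(\<lambda>n. 1 / real n)"
    and "is_tree \<theta>" and "r \<in> fst \<theta>"
    and "\<tau>1 \<in> proper_colorings k \<theta>" and "\<tau>2 \<in> proper_colorings k \<theta>"
  shows "\<exists>c > 0. \<forall>\<^sub>F n in sequentially.
    measure_pmf.prob (planted_replica k n (p n))
      {X. \<bar>Qstat n \<theta> r \<tau>1 \<tau>2 \<omega> X -
            measure_pmf.expectation (planted_replica k n (p n)) (Qstat n \<theta> r \<tau>1 \<tau>2 \<omega>)\<bar>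
          > real n powr (-1/3)}
    \<le> exp (- c * (ln (real n))\<^sup>2)"
proof -
  have k: "k \<ge> 1" using assms(1) by simp
  obtain K where K: "K > 0" "\<forall>\<^sub>F n in sequentially. norm (p n) \<le> K * norm (1 / real n)"
    using assms(3) by (elim landau_o.bigE)
  define M0 where "M0 = nat \<lceil>exp 2 * K\<rceil>"
  have M0: "exp 2 * K \<le> real M0" unfolding M0_def by linarith
  define C2 :: real where "C2 = 6 ^ (2 * \<omega>) * fact (2 * \<omega>)"
  define C4 :: real where "C4 = 6 ^ (4 * \<omega> + 2) * fact (4 * \<omega> + 2)"
  define A where "A = max (max 4 (real M0 + 2)) (max (ln (6 * 2 ^ \<omega> * C2)) (6 * ln (32 * 4 ^ \<omega> * C4)))"
  have ev2: "\<forall>\<^sub>F n in sequentially. real n \<ge> max K 1"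
    using filterlim_real_sequentially unfolding filterlim_at_top by blast
  have lnlim: "filterlim (\<lambda>n. ln (real n)) at_top sequentially"
    by (rule filterlim_compose[OF ln_at_top filterlim_real_sequentially])
  have ev3: "\<forall>\<^sub>F n in sequentially. ln (real n) \<ge> A"
    using lnlim unfolding filterlim_at_top by blast
  have "\<forall>\<^sub>F n in sequentially.
    measure_pmf.prob (planted_replica k n (p n))
      {X. \<bar>Qstat n \<theta> r \<tau>1 \<tau>2 \<omega> X -
            measure_pmf.expectation (planted_replica k n (p n)) (Qstat n \<theta> r \<tau>1 \<tau>2 \<omega>)\<bar>
          > real n powr (-1/3)}
    \<le> exp (- (1/2) * (ln (real n))\<^sup>2)"
    using K(2) ev2 ev3
  proof eventually_elim
    case (elim n)
    have n1: "real n \<ge> 1" using elim(2) by simp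
    then have n: "n > 0" by simp
    have pn0: "0 \<le> p n" using assms(2) by simp
    have "p n \<le> K * (1 / real n)" using elim(1) pn0 n by simp
    then have npK: "real n * p n \<le> K" using n by (simp add: field_simps)
    have "K * (1 / real n) \<le> 1" using elim(2) n by (simp add: field_simps)
    then have pn1: "p n \<le> 1" using \<open>p n \<le> K * (1 / real n)\<close> by linarith
    have LA: "ln (real n) \<ge> A" using elim(3) .
    show ?case
    proof (rule final_point[OF k n pn0 pn1 npK K(1) M0])
      show "4 \<le> ln (real n)" "real M0 + 2 \<le> ln (real n)"
        using LA by (auto simp: A_def)
      show "ln (6 * 2 ^ \<omega> * (6 ^ (2 * \<omega>) * fact (2 * \<omega>))) \<le> ln (real n)"
        using LA unfolding A_def C2_def by linarith
      show "6 * ln (32 * 4 ^ \<omega> * (6 ^ (4 * \<omega> + 2) * fact (4 * \<omega> + 2))) \<le> ln (real n)"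
        using LA unfolding A_def C4_def by linarith
    qed
  qed
  then show ?thesis by (intro exI[of _ "1/2"]) auto
qed


end
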